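(* Let $(R,[\cdot_\lambda\cdot],\alpha,\beta)$ be a regular BiHom-Lie conformal superalgebra, let $(M,\phi,\psi)$ be a BiHom-conformal module of $R$ with $\psi$ invertible, and let $\rho$ be the corresponding representation. Define a $\lambda$-bracket on $R\oplus M$, graded by $(R\oplus M)_\theta=R_\theta\oplus M_\theta$ and with $\partial(r+m)=\partial r+\partial m$, by $$[(r+m)_\lambda(r'+m')]_M=[r_\lambda r']+\rho(r)_\lambda m'-(-1)^{|r'||m|}\rho(\alpha^{-1}\beta(r'))_{-\partial-\lambda}\,\phi\psi^{-1}(m)$$ for homogeneous $r,r'\in R$, $m,m'\in M$. Then $(R\oplus M,[\cdot_\lambda\cdot]_M,\alpha+\phi,\beta+\psi)$ is a BiHom-Lie conformal superalgebra, where $(\alpha+\phi)(r+m)=\alpha(r)+\phi(m)$ and $(\beta+\psi)(r+m)=\beta(r)+\psi(m)$.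
   Context: All spaces are over $\mathbb{C}$. For a $\mathbb{C}[\partial]$-module $V$, $V[\lambda]=\mathbb{C}[\lambda]\otimes V$. $|a|$ denotes the parity of a homogeneous element. Substitution $\lambda\mapsto-\lambda-\partial$ means: expand in powers of $\lambda$ and replace $\lambda$ by $-\lambda-\partial$, $\partial$ acting on the coefficients. A BiHom-Lie conformal superalgebra $(R,[\cdot_\lambda\cdot],\alpha,\beta)$ is a $\mathbb{Z}_2$-graded $\mathbb{C}[\partial]$-module $R$ with two commuting linear maps $\alpha,\beta$ and a $\mathbb{C}$-linear map $R\otimes R\to R[\lambda]$, $a\otimes b\mapsto[a_\lambda b]$, with $[R_{i\,\lambda}R_j]\subseteq R_{i+j}[\lambda]$, such that for all homogeneous $a,b,c$: (1) $\alpha\partial=\partial\alpha$, $\beta\partial=\partial\beta$; (2) $\alpha([a_\lambda b])=[\alpha(a)_\lambda\alpha(b)]$, $\beta([a_\lambda b])=[\beta(a)_\lambda\beta(b)]$; (3) $[(\partial a)_\lambda b]=-\lambda[a_\lambda b]$, $[a_\lambda(\partial b)]=(\partial+\lambda)[a_\lambda b]$; (4) $[\beta(a)_\lambda\alpha(b)]=-(-1)^{|a||b|}[\beta(b)_{-\lambda-\partial}\alpha(a)]$; (5) $[\alpha\beta(a)_\lambda[b_\mu c]]=[[\beta(a)_\lambda b]_{\lambda+\mu}\beta(c)]+(-1)^{|a||b|}[\beta(b)_\mu[\alpha(a)_\lambda c]]$. It is regular if $\alpha,\beta$ are bijective. A BiHom-conformal module $(M,\phi,\psi)$ of $R$ is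 a $\mathbb{Z}_2$-graded $\mathbb{C}[\partial]$-module $M$ with linear maps $\phi,\psi:M\to M$ and a $\mathbb{C}$-linear map $\rho$ assigning to each $a\in R$ a $\mathbb{C}$-linear map $\rho(a)_\lambda:M\to M[\lambda]$ with $\rho(a)_\lambda(M_\theta)\subseteq M_{\theta+|a|}[\lambda]$ (the representation), such that for all homogeneous $a,b\in R$: $\rho(\partial a)_\lambda=-\lambda\rho(a)_\lambda$, $\rho(a)_\lambda\partial=(\lambda+\partial)\rho(a)_\lambda$; $\phi\psi=\psi\phi$, $\psi\partial=\partial\psi$, $\phi\partial=\partial\phi$; $\phi\rho(a)_\lambda=\rho(\alpha(a))_\lambda\phi$, $\psi\rho(a)_\lambda=\rho(\beta(a))_\lambda\psi$; and $\rho([\beta(a)_\lambda b])_{\lambda+\mu}\psi=\rho(\alpha\beta(a))_\lambda\rho(b)_\mu-(-1)^{|a||b|}\rho(\beta(b))_\mu\rho(\alpha(a))_\lambda$. Here if $[x_\lambda y]=\sum_n\lambda^nc_n$ then $\rho([x_\lambda y])_{\lambda+\mu}=\sum_n\lambda^n\rho(c_n)_{\lambda+\mu}$, and maps are extended $\mathbb{C}[\lambda,\mu]$-linearly. *)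

theory Defs
  imports Complex_Main "HOL-Library.Product_Plus"
begin

(* Polynomials in one variable lambda with coefficients in V: p n = coefficient of lambda^n,
   finitely supported. Two-variable polynomials: q i j = coefficient of lambda^i mu^j. *)

definition lpoly :: "(nat \<Rightarrow> 'v::zero) \<Rightarrow> bool" where
  "lpoly p \<longleftrightarrow> finite {n. p n \<noteq> 0}"

definition lshift :: "(nat \<Rightarrow> 'v::zero) \<Rightarrow> nat \<Rightarrow> 'v" where
  "lshift p n = (if n = 0 then 0 else p (n - 1))"

(* substitution lambda |-> -lambda - d, d acting on the coefficients:
   sum_n (-lambda-d)^n p_n = sum_k lambda^k sum_n (-1)^n (n choose k) d^(n-k) p_n *)
definition subst_neg ::
  "(complex \<Rightarrow> 'v \<Rightarrow> 'v) \<Rightarrow> ('v \<Rightarrow> 'v) \<Rightarrow> (nat \<Rightarrow> 'v::comm_monoid_add) \<Rightarrow> nat \<Rightarrow> 'v" where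
  "subst_neg s d p k = (\<Sum>n\<in>{n. p n \<noteq> 0}. s ((-1) ^ n * of_nat (n choose k)) ((d ^^ (n - k)) (p n)))"

(* given q n = a polynomial in nu, the two-variable polynomial
   sum_n lambda^n (q n evaluated at nu = lambda + mu); coefficient of lambda^i mu^j *)
definition at_sum ::
  "(complex \<Rightarrow> 'v \<Rightarrow> 'v) \<Rightarrow> (nat \<Rightarrow> nat \<Rightarrow> 'v::comm_monoid_add) \<Rightarrow> nat \<Rightarrow> nat \<Rightarrow> 'v" where
  "at_sum s q i j = (\<Sum>n\<le>i. s (of_nat ((i - n + j) choose j)) (q n (i - n + j)))"

(* parity: False = even (0), True = odd (1); (-1)^(|a||b|) *)
definition psign :: "bool \<Rightarrow> bool \<Rightarrow> complex" where
  "psign i j = (if i \<and> j then -1 else 1)"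

definition graded_cmodule ::
  "(complex \<Rightarrow> 'v \<Rightarrow> 'v::ab_group_add) \<Rightarrow> (bool \<Rightarrow> 'v set) \<Rightarrow> ('v \<Rightarrow> 'v) \<Rightarrow> bool" where
  "graded_cmodule s G d \<longleftrightarrow>
     Vector_Spaces.vector_space s \<and>
     (\<forall>\<theta>. module.subspace s (G \<theta>)) \<and>
     G False \<inter> G True = {0} \<and>
     (\<forall>v. \<exists>a\<in>G False. \<exists>b\<in>G True. v = a + b) \<and>
     Vector_Spaces.linear s s d \<and>
     (\<forall>\<theta>. d ` G \<theta> \<subseteq> G \<theta>)"

definition comp :: "(bool \<Rightarrow> 'v::ab_group_add set) \<Rightarrow> bool \<Rightarrow> 'v \<Rightarrow> 'v" where
  "comp G i v = (THE u. u \<in> G i \<and> v - u \<in> G (\<not> i))"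

(* BiHom-Lie conformal superalgebra (R, [._. .], alpha, beta);
   br a b n = coefficient of lambda^n in [a_lambda b] *)
definition bihom_lcsa ::
  "(complex \<Rightarrow> 'r \<Rightarrow> 'r::ab_group_add) \<Rightarrow> (bool \<Rightarrow> 'r set) \<Rightarrow> ('r \<Rightarrow> 'r)
   \<Rightarrow> ('r \<Rightarrow> 'r \<Rightarrow> nat \<Rightarrow> 'r) \<Rightarrow> ('r \<Rightarrow> 'r) \<Rightarrow> ('r \<Rightarrow> 'r) \<Rightarrow> bool" where
  "bihom_lcsa s G d br \<alpha> \<beta> \<longleftrightarrow>
     graded_cmodule s G d \<and>
     Vector_Spaces.linear s s \<alpha> \<and> Vector_Spaces.linear s s \<beta> \<and> \<alpha> \<circ> \<beta> = \<beta> \<circ> \<alpha> \<and>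
     (\<forall>\<theta>. \<alpha> ` G \<theta> \<subseteq> G \<theta> \<and> \<beta> ` G \<theta> \<subseteq> G \<theta>) \<and>
     (\<forall>b n. Vector_Spaces.linear s s (\<lambda>a. br a b n)) \<and>
     (\<forall>a n. Vector_Spaces.linear s s (\<lambda>b. br a b n)) \<and>
     (\<forall>a b. lpoly (br a b)) \<and>
     (\<forall>i j a b n. a \<in> G i \<longrightarrow> b \<in> G j \<longrightarrow> br a b n \<in> G (i \<noteq> j)) \<and>
     \<alpha> \<circ> d = d \<circ> \<alpha> \<and> \<beta> \<circ> d = d \<circ> \<beta> \<and>
     (\<forall>a b n. \<alpha> (br a b n) = br (\<alpha> a) (\<alpha> b) n) \<and>
     (\<forall>a b n. \<beta> (br a b n) = br (\<beta> a) (\<beta> b) n) \<and>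
     (\<forall>a b n. br (d a) b n = - lshift (br a b) n) \<and>
     (\<forall>a b n. br a (d b) n = d (br a b n) + lshift (br a b) n) \<and>
     (\<forall>i j a b. a \<in> G i \<longrightarrow> b \<in> G j \<longrightarrow>
        (\<forall>n. br (\<beta> a) (\<alpha> b) n = s (- psign i j) (subst_neg s d (br (\<beta> b) (\<alpha> a)) n))) \<and>
     (\<forall>i j k a b c. a \<in> G i \<longrightarrow> b \<in> G j \<longrightarrow> c \<in> G k \<longrightarrow>
        (\<forall>p q. br (\<alpha> (\<beta> a)) (br b c q) p =
               at_sum s (\<lambda>n. br (br (\<beta> a) b n) (\<beta> c)) p q
               + s (psign i j) (br (\<beta> b) (br (\<alpha> a) c p) q)))"

(* BiHom-conformal module (M, phi, psi) of R with representation rho;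
   rho a m n = coefficient of lambda^n in rho(a)_lambda m *)
definition bihom_conf_module ::
  "(complex \<Rightarrow> 'r \<Rightarrow> 'r::ab_group_add) \<Rightarrow> (bool \<Rightarrow> 'r set) \<Rightarrow> ('r \<Rightarrow> 'r)
   \<Rightarrow> ('r \<Rightarrow> 'r \<Rightarrow> nat \<Rightarrow> 'r) \<Rightarrow> ('r \<Rightarrow> 'r) \<Rightarrow> ('r \<Rightarrow> 'r)
   \<Rightarrow> (complex \<Rightarrow> 'm \<Rightarrow> 'm::ab_group_add) \<Rightarrow> (bool \<Rightarrow> 'm set) \<Rightarrow> ('m \<Rightarrow> 'm)
   \<Rightarrow> ('r \<Rightarrow> 'm \<Rightarrow> nat \<Rightarrow> 'm) \<Rightarrow> ('m \<Rightarrow> 'm) \<Rightarrow> ('m \<Rightarrow> 'm) \<Rightarrow> bool" where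
  "bihom_conf_module sR GR dR br \<alpha> \<beta> sM GM dM \<rho> \<phi> \<psi> \<longleftrightarrow>
     graded_cmodule sM GM dM \<and>
     Vector_Spaces.linear sM sM \<phi> \<and> Vector_Spaces.linear sM sM \<psi> \<and>
     (\<forall>\<theta>. \<phi> ` GM \<theta> \<subseteq> GM \<theta> \<and> \<psi> ` GM \<theta> \<subseteq> GM \<theta>) \<and>
     (\<forall>m n. Vector_Spaces.linear sR sM (\<lambda>a. \<rho> a m n)) \<and>
     (\<forall>a n. Vector_Spaces.linear sM sM (\<lambda>m. \<rho> a m n)) \<and>
     (\<forall>a m. lpoly (\<rho> a m)) \<and>
     (\<forall>i \<theta> a m n. a \<in> GR i \<longrightarrow> m \<in> GM \<theta> \<longrightarrow> \<rho> a m n \<in> GM (i \<noteq> \<theta>)) \<and>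
     (\<forall>a m n. \<rho> (dR a) m n = - lshift (\<rho> a m) n) \<and>
     (\<forall>a m n. \<rho> a (dM m) n = dM (\<rho> a m n) + lshift (\<rho> a m) n) \<and>
     \<phi> \<circ> \<psi> = \<psi> \<circ> \<phi> \<and> \<psi> \<circ> dM = dM \<circ> \<psi> \<and> \<phi> \<circ> dM = dM \<circ> \<phi> \<and>
     (\<forall>a m n. \<phi> (\<rho> a m n) = \<rho> (\<alpha> a) (\<phi> m) n) \<and>
     (\<forall>a m n. \<psi> (\<rho> a m n) = \<rho> (\<beta> a) (\<psi> m) n) \<and>
     (\<forall>i j a b m. a \<in> GR i \<longrightarrow> b \<in> GR j \<longrightarrow>
        (\<forall>p q. at_sum sM (\<lambda>n. \<rho> (br (\<beta> a) b n) (\<psi> m)) p q =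
               \<rho> (\<alpha> (\<beta> a)) (\<rho> b m q) p - sM (psign i j) (\<rho> (\<beta> b) (\<rho> (\<alpha> a) m p) q)))"

definition prod_scale ::
  "(complex \<Rightarrow> 'r \<Rightarrow> 'r) \<Rightarrow> (complex \<Rightarrow> 'm \<Rightarrow> 'm) \<Rightarrow> complex \<Rightarrow> 'r \<times> 'm \<Rightarrow> 'r \<times> 'm" where
  "prod_scale sR sM c x = (sR c (fst x), sM c (snd x))"

definition prod_grading :: "(bool \<Rightarrow> 'r set) \<Rightarrow> (bool \<Rightarrow> 'm set) \<Rightarrow> bool \<Rightarrow> ('r \<times> 'm) set" where
  "prod_grading GR GM \<theta> = GR \<theta> \<times> GM \<theta>"

(* [(r+m)_lambda (r'+m')]_M = [r_lambda r'] + rho(r)_lambda m'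
     - (-1)^(|r'||m|) rho(alpha^-1 beta r')_(-d-lambda) phi psi^-1 (m),
   extended bilinearly via homogeneous components *)
definition sd_bracket ::
  "(bool \<Rightarrow> 'r::ab_group_add set) \<Rightarrow> ('r \<Rightarrow> 'r \<Rightarrow> nat \<Rightarrow> 'r) \<Rightarrow> ('r \<Rightarrow> 'r) \<Rightarrow> ('r \<Rightarrow> 'r)
   \<Rightarrow> (complex \<Rightarrow> 'm \<Rightarrow> 'm::ab_group_add) \<Rightarrow> (bool \<Rightarrow> 'm set) \<Rightarrow> ('m \<Rightarrow> 'm)
   \<Rightarrow> ('r \<Rightarrow> 'm \<Rightarrow> nat \<Rightarrow> 'm) \<Rightarrow> ('m \<Rightarrow> 'm) \<Rightarrow> ('m \<Rightarrow> 'm)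
   \<Rightarrow> 'r \<times> 'm \<Rightarrow> 'r \<times> 'm \<Rightarrow> nat \<Rightarrow> 'r \<times> 'm" where
  "sd_bracket GR br \<alpha> \<beta> sM GM dM \<rho> \<phi> \<psi> x y n =
     (br (fst x) (fst y) n,
      \<rho> (fst x) (snd y) n
      - (\<Sum>i\<in>UNIV. \<Sum>j\<in>UNIV. sM (psign i j)
            (subst_neg sM dM (\<rho> (inv \<alpha> (\<beta> (comp GR i (fst y))))
                                   (\<phi> (inv \<psi> (comp GM j (snd x))))) n)))"

end

theory Submission
  imports Defs "HOL-Computational_Algebra.Polynomial"
begin

lemma linD:
  assumes "Vector_Spaces.linear s1 s2 f"
  shows "f (x + y) = f x + f y" "f (s1 c x) = s2 c (f x)" "f 0 = 0" "f (- x) = - f x"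
    "f (x - y) = f x - f y" "f (sum g A) = (\<Sum>a\<in>A. f (g a))"
  using assms unfolding Vector_Spaces.linear_iff_module_hom
  by (auto simp: module_hom.add module_hom.scale module_hom.zero module_hom.neg module_hom.diff module_hom.sum)

definition opp :: "(complex \<Rightarrow> 'v \<Rightarrow> 'v) \<Rightarrow> ('v \<Rightarrow> 'v) \<Rightarrow> complex poly \<Rightarrow> 'v \<Rightarrow> 'v::ab_group_add" where
  "opp s d g v = (\<Sum>k\<le>degree g. s (coeff g k) ((d^^k) v))"

definition OE :: "(complex \<Rightarrow> 'v \<Rightarrow> 'v) \<Rightarrow> ('v \<Rightarrow> 'v) \<Rightarrow> (nat \<Rightarrow> 'v) \<Rightarrow> complex poly \<Rightarrow> 'v::ab_group_add" where
  "OE s d p h = (\<Sum>n\<in>{n. p n \<noteq> 0}. opp s d (h^n) (p n))"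

definition bnd :: "nat \<Rightarrow> (nat \<Rightarrow> 'v::zero) \<Rightarrow> bool" where
  "bnd N p \<longleftrightarrow> (\<forall>n>N. p n = 0)"

lemma lpoly_bnd: "lpoly p \<Longrightarrow> \<exists>N. bnd N p"
proof -
  assume "lpoly p"
  then have f: "finite {n. p n \<noteq> 0}" by (simp add: lpoly_def)
  show ?thesis
  proof (intro exI[of _ "Max (insert 0 {n. p n \<noteq> 0})"])
    show "bnd (Max (insert 0 {n. p n \<noteq> 0})) p"
      unfolding bnd_def using f by (metis (mono_tags, lifting) Max_ge finite_insert insertCI leD mem_Collect_eq)
  qed
qed

lemma bnd_lpoly: "bnd N p \<Longrightarrow> lpoly p"
  unfolding bnd_def lpoly_def by (metis (mono_tags, lifting) finite_atMost finite_subset mem_Collect_eq not_le_imp_less subsetI atMost_iff)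

lemma bnd_mono: "bnd N p \<Longrightarrow> N \<le> M \<Longrightarrow> bnd M p"
  unfolding bnd_def by auto

lemma lpoly_bnd2: "lpoly p \<Longrightarrow> lpoly q \<Longrightarrow> \<exists>N. bnd N p \<and> bnd N q"
  by (metis bnd_mono lpoly_bnd max.cobounded1 max.cobounded2)

lemma pcompose_power_left: "pcompose (p ^ n) q = (pcompose p q) ^ n"
  by (induction n) (simp_all add: pcompose_mult pcompose_1)

locale dmod =
  fixes s :: "complex \<Rightarrow> 'v::ab_group_add \<Rightarrow> 'v" and d :: "'v \<Rightarrow> 'v"
  assumes vs: "vector_space s" and dlin: "Vector_Spaces.linear s s d"
begin

sublocale V: vector_space s by (rule vs)

lemma dp_lin: "Vector_Spaces.linear s s (d^^k)"
proof (induction k)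
  case 0 then show ?case using V.linear_id by (simp add: id_def)
next
  case (Suc k) then show ?case
    using Vector_Spaces.linear_compose[OF Suc dlin] by (simp add: funpow_Suc_right[symmetric] o_def)
qed

lemmas d_add = linD(1)[OF dlin] and d_scale = linD(2)[OF dlin] and d_zero = linD(3)[OF dlin]
  and d_neg = linD(4)[OF dlin] and d_diff = linD(5)[OF dlin] and d_sum = linD(6)[OF dlin]
lemmas dp_add = linD(1)[OF dp_lin] and dp_scale = linD(2)[OF dp_lin] and dp_zero = linD(3)[OF dp_lin]
  and dp_neg = linD(4)[OF dp_lin] and dp_diff = linD(5)[OF dp_lin] and dp_sum = linD(6)[OF dp_lin]

abbreviation "op \<equiv> opp s d"
abbreviation "ev \<equiv> OE s d"

lemma opp_bound: "degree g \<le> N \<Longrightarrow> op g v = (\<Sum>k\<le>N. s (coeff g k) ((d^^k) v))"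
  unfolding opp_def
  by (rule sum.mono_neutral_left) (auto simp: coeff_eq_0)

lemma opp_lin: "Vector_Spaces.linear s s (op g)"
  unfolding Vector_Spaces.linear_iff
  by (auto simp: vs opp_def dp_add dp_scale V.scale_right_distrib sum.distrib V.scale_sum_right V.scale_scale mult.commute)

lemmas opp_add = linD(1)[OF opp_lin] and opp_scale = linD(2)[OF opp_lin] and opp_zero = linD(3)[OF opp_lin]
  and opp_neg = linD(4)[OF opp_lin] and opp_diff = linD(5)[OF opp_lin] and opp_sum = linD(6)[OF opp_lin]

lemma opp_padd: "op (g + h) v = op g v + op h v"
proof -
  let ?N = "max (degree g) (degree h)"
  have "op (g + h) v = (\<Sum>k\<le>?N. s (coeff (g + h) k) ((d^^k) v))"
    by (rule opp_bound) (simp add: degree_add_le)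
  also have "\<dots> = (\<Sum>k\<le>?N. s (coeff g k) ((d^^k) v)) + (\<Sum>k\<le>?N. s (coeff h k) ((d^^k) v))"
    by (simp add: V.scale_left_distrib sum.distrib)
  also have "\<dots> = op g v + op h v"
    by (simp add: opp_bound[of g ?N v, symmetric] opp_bound[of h ?N v, symmetric])
  finally show ?thesis .
qed

lemma opp_smult: "op (smult c g) v = s c (op g v)"
proof -
  have "op (smult c g) v = (\<Sum>k\<le>degree g. s (coeff (smult c g) k) ((d^^k) v))"
    by (rule opp_bound) simp
  then show ?thesis by (simp add: opp_def V.scale_sum_right)
qed

lemma opp_const: "op [:c:] v = s c v"
  by (simp add: opp_def)

lemma opp_0: "op 0 v = 0"
  by (simp add: opp_def)

lemma opp_1: "op 1 v = v"
  by (simp add: opp_def)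

lemma opp_pCons: "op (pCons a g) v = s a v + d (op g v)"
proof -
  have "op (pCons a g) v = (\<Sum>k\<le>Suc (degree g). s (coeff (pCons a g) k) ((d^^k) v))"
    by (rule opp_bound) (simp add: degree_pCons_le)
  also have "\<dots> = s a v + (\<Sum>k\<le>degree g. s (coeff g k) ((d^^(Suc k)) v))"
    by (subst sum.atMost_Suc_shift) simp
  also have "\<dots> = s a v + d (op g v)"
    by (simp add: opp_def d_sum d_scale)
  finally show ?thesis .
qed

lemma opp_X: "op [:0,1:] v = d v"
  by (simp add: opp_pCons opp_const opp_0 d_zero)

lemma opp_mult: "op (g * h) v = op g (op h v)"
proof (induction g)
  case 0 then show ?case by (simp add: opp_0)
next
  case (pCons a g)
  have "op (pCons a g * h) v = s a (op h v) + d (op (g * h) v)"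
    by (simp add: opp_padd opp_smult opp_pCons opp_0)
  then show ?case using pCons by (simp add: opp_pCons)
qed

lemma opp_pminus: "op (- g) v = - op g v"
  using opp_smult[of "-1" g v] by simp

lemma opp_pdiff: "op (g - h) v = op g v - op h v"
  using opp_padd[of g "-h" v] by (simp add: opp_pminus)

lemma opp_psum: "op (\<Sum>i\<in>A. f i) v = (\<Sum>i\<in>A. op (f i) v)"
  by (induction A rule: infinite_finite_induct) (simp_all add: opp_0 opp_padd)

lemma opp_d: "op g (d v) = d (op g v)"
  using opp_mult[of g "[:0,1:]" v] opp_mult[of "[:0,1:]" g v]
  by (simp add: opp_X mult.commute)

lemma opp_Xpow: "op ([:0,1:]^k) v = (d^^k) v"
proof (induction k)
  case 0 then show ?case by (simp add: opp_1)
next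
  case (Suc k)
  have "op ([:0,1:]^Suc k) v = op [:0,1:] (op ([:0,1:]^k) v)" by (simp only: power_Suc opp_mult)
  then show ?case using Suc by (simp add: opp_X)
qed

lemma opp_comm:
  assumes "Vector_Spaces.linear s s f" "\<And>x. f (d x) = d (f x)"
  shows "f (op g v) = op g (f v)"
proof -
  have "\<And>k x. f ((d^^k) x) = (d^^k) (f x)"
  proof -
    fix k x show "f ((d^^k) x) = (d^^k) (f x)" by (induction k) (simp_all add: assms(2))
  qed
  then show ?thesis by (simp add: opp_def linD(6)[OF assms(1)] linD(2)[OF assms(1)])
qed

lemma opp_comm2:
  assumes "Vector_Spaces.linear s2 s f" "\<And>x. f (d2 x) = d (f x)" "\<And>c x. f (s2 c x) = s c (f x)"
  shows "f (opp s2 d2 g v) = op g (f v)"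
proof -
  have "\<And>k x. f ((d2^^k) x) = (d^^k) (f x)"
  proof -
    fix k x show "f ((d2^^k) x) = (d^^k) (f x)" by (induction k) (simp_all add: assms(2))
  qed
  then show ?thesis by (simp add: opp_def linD(6)[OF assms(1)] assms(3))
qed

end

lemma lpoly_zero[simp]: "lpoly (\<lambda>n. 0)"
  by (simp add: lpoly_def)

lemma lpoly_map: "f 0 = 0 \<Longrightarrow> lpoly p \<Longrightarrow> lpoly (\<lambda>n. f (p n))"
  unfolding lpoly_def by (rule finite_subset[of _ "{n. p n \<noteq> 0}"]) auto

lemma lpoly_add: "lpoly (p::nat \<Rightarrow> 'v::ab_group_add) \<Longrightarrow> lpoly q \<Longrightarrow> lpoly (\<lambda>n. p n + q n)"
  unfolding lpoly_def by (rule finite_subset[of _ "{n. p n \<noteq> 0} \<union> {n. q n \<noteq> 0}"]) auto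

lemma lpoly_diff: "lpoly (p::nat \<Rightarrow> 'v::ab_group_add) \<Longrightarrow> lpoly q \<Longrightarrow> lpoly (\<lambda>n. p n - q n)"
  unfolding lpoly_def by (rule finite_subset[of _ "{n. p n \<noteq> 0} \<union> {n. q n \<noteq> 0}"]) auto

lemma lpoly_neg: "lpoly (p::nat \<Rightarrow> 'v::ab_group_add) \<Longrightarrow> lpoly (\<lambda>n. - p n)"
  unfolding lpoly_def by simp

lemma lpoly_sum: "(\<And>i. i \<in> A \<Longrightarrow> lpoly (f i :: nat \<Rightarrow> 'v::ab_group_add)) \<Longrightarrow> lpoly (\<lambda>n. \<Sum>i\<in>A. f i n)"
proof (induction A rule: infinite_finite_induct)
  case (insert x F) then show ?case using lpoly_add[of "f x" "\<lambda>n. \<Sum>i\<in>F. f i n"] by simp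
qed simp_all

lemma lpoly_lshift: "lpoly p \<Longrightarrow> lpoly (lshift p)"
proof -
  assume "lpoly p"
  then obtain N where "bnd N p" using lpoly_bnd by blast
  then have "bnd (Suc N) (lshift p)" by (auto simp: bnd_def lshift_def)
  then show ?thesis by (rule bnd_lpoly)
qed

lemma bnd_sub: assumes "bnd N p" shows "{n. p n \<noteq> 0} \<subseteq> {..N}"
proof
  fix n assume "n \<in> {n. p n \<noteq> 0}"
  then have "p n \<noteq> 0" by simp
  then have "\<not> N < n" using assms unfolding bnd_def by blast
  then show "n \<in> {..N}" by simp
qed

context dmod begin

lemma OE_bound: "bnd N p \<Longrightarrow> ev p h = (\<Sum>n\<le>N. op (h^n) (p n))"
  unfolding OE_def
  apply (rule sum.mono_neutral_left)
  using bnd_sub[of N p] by (auto simp: opp_zero)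

lemma OE_zero: "ev (\<lambda>n. 0) h = 0"
  by (simp add: OE_def)

lemma OE_add: "lpoly p \<Longrightarrow> lpoly q \<Longrightarrow> ev (\<lambda>n. p n + q n) h = ev p h + ev q h"
proof -
  assume "lpoly p" "lpoly q"
  then obtain N where N: "bnd N p" "bnd N q" using lpoly_bnd2 by blast
  then have "bnd N (\<lambda>n. p n + q n)" by (simp add: bnd_def)
  then show ?thesis using N by (simp add: OE_bound opp_add sum.distrib)
qed

lemma OE_scale: "lpoly p \<Longrightarrow> ev (\<lambda>n. s c (p n)) h = s c (ev p h)"
proof -
  assume "lpoly p"
  then obtain N where N: "bnd N p" using lpoly_bnd by blast
  then have "bnd N (\<lambda>n. s c (p n))" by (simp add: bnd_def)
  then show ?thesis using N by (simp add: OE_bound opp_scale V.scale_sum_right)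
qed

lemma OE_neg: "lpoly p \<Longrightarrow> ev (\<lambda>n. - p n) h = - ev p h"
  using OE_scale[of p "-1" h] by simp

lemma OE_diff: "lpoly p \<Longrightarrow> lpoly q \<Longrightarrow> ev (\<lambda>n. p n - q n) h = ev p h - ev q h"
  using OE_add[of p "\<lambda>n. - q n" h] OE_neg[of q h] lpoly_neg[of q] by simp

lemma OE_sum: "(\<And>i. i \<in> A \<Longrightarrow> lpoly (f i)) \<Longrightarrow> ev (\<lambda>n. \<Sum>i\<in>A. f i n) h = (\<Sum>i\<in>A. ev (f i) h)"
proof (induction A rule: infinite_finite_induct)
  case (insert x F)
  then show ?case using OE_add[of "f x" "\<lambda>n. \<Sum>i\<in>F. f i n" h] lpoly_sum[of F f] by simp
qed (simp_all add: OE_zero)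

lemma OE_lshift: "lpoly p \<Longrightarrow> ev (lshift p) h = op h (ev p h)"
proof -
  assume "lpoly p"
  then obtain N where N: "bnd N p" using lpoly_bnd by blast
  then have N2: "bnd (Suc N) (lshift p)" by (auto simp: bnd_def lshift_def)
  have "ev (lshift p) h = (\<Sum>n\<le>Suc N. op (h^n) (lshift p n))" using N2 by (rule OE_bound)
  also have "\<dots> = (\<Sum>n\<le>N. op (h^Suc n) (p n))"
    by (subst sum.atMost_Suc_shift) (simp add: lshift_def opp_zero)
  also have "\<dots> = op h (ev p h)"
    using N by (simp add: OE_bound opp_sum opp_mult)
  finally show ?thesis .
qed

lemma OE_d: "lpoly p \<Longrightarrow> ev (\<lambda>n. d (p n)) h = d (ev p h)"
proof -
  assume "lpoly p"
  then obtain N where N: "bnd N p" using lpoly_bnd by blast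
  then have "bnd N (\<lambda>n. d (p n))" by (simp add: bnd_def d_zero)
  then show ?thesis using N by (simp add: OE_bound opp_d d_sum)
qed

lemma OE_comm:
  assumes "Vector_Spaces.linear s s f" "\<And>x. f (d x) = d (f x)" "lpoly p"
  shows "f (ev p h) = ev (\<lambda>n. f (p n)) h"
proof -
  obtain N where N: "bnd N p" using lpoly_bnd assms(3) by blast
  then have "bnd N (\<lambda>n. f (p n))" by (simp add: bnd_def linD(3)[OF assms(1)])
  then show ?thesis using N by (simp add: OE_bound linD(6)[OF assms(1)] opp_comm[OF assms(1,2)])
qed

lemma opp_constpow: "op ([:c:]^n) v = s (c^n) v"
  by (simp add: poly_const_pow opp_const)

lemma OE_const_bound: "bnd N p \<Longrightarrow> ev p [:c:] = (\<Sum>n\<le>N. s (c^n) (p n))"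
  by (simp add: OE_bound opp_constpow)

abbreviation "sn \<equiv> subst_neg s d"

lemma subst_bound: "bnd N p \<Longrightarrow> sn p k = (\<Sum>n\<le>N. s ((-1)^n * of_nat (n choose k)) ((d^^(n-k)) (p n)))"
  unfolding subst_neg_def
  apply (rule sum.mono_neutral_left)
  using bnd_sub[of N p] by (auto simp: dp_zero)

lemma subst_bnd: "bnd N p \<Longrightarrow> bnd N (sn p)"
  by (auto simp: bnd_def subst_bound[of N p] intro!: sum.neutral)

lemma subst_lpoly: "lpoly p \<Longrightarrow> lpoly (sn p)"
  using lpoly_bnd subst_bnd bnd_lpoly by blast

lemma subst_zero: "sn (\<lambda>n. 0) k = 0"
  by (simp add: subst_neg_def)

lemma subst_add: "lpoly p \<Longrightarrow> lpoly q \<Longrightarrow> sn (\<lambda>n. p n + q n) k = sn p k + sn q k"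
proof -
  assume "lpoly p" "lpoly q"
  then obtain N where N: "bnd N p" "bnd N q" using lpoly_bnd2 by blast
  then have "bnd N (\<lambda>n. p n + q n)" by (simp add: bnd_def)
  then show ?thesis using N by (simp add: subst_bound dp_add sum.distrib V.scale_right_distrib)
qed

lemma subst_scale: "lpoly p \<Longrightarrow> sn (\<lambda>n. s c (p n)) k = s c (sn p k)"
proof -
  assume "lpoly p"
  then obtain N where N: "bnd N p" using lpoly_bnd by blast
  then have "bnd N (\<lambda>n. s c (p n))" by (simp add: bnd_def)
  then show ?thesis using N by (simp add: subst_bound dp_scale V.scale_sum_right mult.commute)
qed

lemma subst_neg': "lpoly p \<Longrightarrow> sn (\<lambda>n. - p n) k = - sn p k"
  using subst_scale[of p "-1" k] by simp

lemma subst_diff: "lpoly p \<Longrightarrow> lpoly q \<Longrightarrow> sn (\<lambda>n. p n - q n) k = sn p k - sn q k"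
  using subst_add[of p "\<lambda>n. - q n" k] subst_neg'[of q k] lpoly_neg[of q] by simp

lemma subst_sum: "(\<And>i. i \<in> A \<Longrightarrow> lpoly (f i)) \<Longrightarrow> sn (\<lambda>n. \<Sum>i\<in>A. f i n) k = (\<Sum>i\<in>A. sn (f i) k)"
proof (induction A rule: infinite_finite_induct)
  case (insert x F)
  then show ?case using subst_add[of "f x" "\<lambda>n. \<Sum>i\<in>F. f i n" k] lpoly_sum[of F f] by simp
qed (simp_all add: subst_zero)

lemma subst_comm:
  assumes "Vector_Spaces.linear s s f" "\<And>x. f (d x) = d (f x)" "lpoly p"
  shows "f (sn p k) = sn (\<lambda>n. f (p n)) k"
proof -
  obtain N where N: "bnd N p" using lpoly_bnd assms(3) by blast
  have "\<And>k x. f ((d^^k) x) = (d^^k) (f x)"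
  proof -
    fix k x show "f ((d^^k) x) = (d^^k) (f x)" by (induction k) (simp_all add: assms(2))
  qed
  moreover have "bnd N (\<lambda>n. f (p n))" using N by (simp add: bnd_def linD(3)[OF assms(1)])
  ultimately show ?thesis using N by (simp add: subst_bound linD(6)[OF assms(1)] linD(2)[OF assms(1)])
qed

lemma ofnat_smult: "of_nat m * (p::complex poly) = smult (of_nat m) p"
  by (simp add: of_nat_poly)
lemma m1pow_smult: "(-1)^n * (p::complex poly) = smult ((-1)^n) p"
  by (induction n) simp_all
lemma smult_sign_choose: "smult ((-1)^n * of_nat m) q = (-1)^n * of_nat m * (q::complex poly)"
  by (simp add: mult.assoc ofnat_smult m1pow_smult)

lemma binom_poly:
  fixes h :: "complex poly"
  assumes "n \<le> N"
  shows "(\<Sum>k\<le>N. smult ((-1)^n * of_nat (n choose k)) (h^k * [:0,1:]^(n-k))) = (- h - [:0,1:])^n"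
proof -
  have "(- h - [:0,1:])^n = (-1)^n * (h + [:0,1:])^n"
    by (metis minus_diff_eq minus_add_distrib power_minus diff_conv_add_uminus)
  also have "\<dots> = (-1)^n * (\<Sum>k\<le>n. of_nat (n choose k) * h^k * [:0,1:]^(n-k))"
    by (simp add: binomial_ring)
  also have "\<dots> = (\<Sum>k\<le>n. smult ((-1)^n * of_nat (n choose k)) (h^k * [:0,1:]^(n-k)))"
    unfolding sum_distrib_left by (rule sum.cong[OF refl]) (simp only: smult_sign_choose mult.assoc)
  also have "\<dots> = (\<Sum>k\<le>N. smult ((-1)^n * of_nat (n choose k)) (h^k * [:0,1:]^(n-k)))"
    by (rule sum.mono_neutral_left) (use assms in auto)
  finally show ?thesis by simp
qed

lemma OE_subst: "lpoly p \<Longrightarrow> ev (sn p) h = ev p (- h - [:0,1:])"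
proof -
  assume "lpoly p"
  then obtain N where N: "bnd N p" using lpoly_bnd by blast
  have "ev (sn p) h = (\<Sum>k\<le>N. op (h^k) (sn p k))" using subst_bnd[OF N] by (rule OE_bound)
  also have "\<dots> = (\<Sum>k\<le>N. \<Sum>n\<le>N. op (smult ((-1)^n * of_nat (n choose k)) (h^k * [:0,1:]^(n-k))) (p n))"
    by (simp add: subst_bound[OF N] opp_sum opp_mult opp_smult opp_Xpow opp_scale)
  also have "\<dots> = (\<Sum>n\<le>N. \<Sum>k\<le>N. op (smult ((-1)^n * of_nat (n choose k)) (h^k * [:0,1:]^(n-k))) (p n))"
    by (rule sum.swap)
  also have "\<dots> = (\<Sum>n\<le>N. op ((- h - [:0,1:])^n) (p n))"
  proof (rule sum.cong[OF refl])
    fix n assume "n \<in> {..N}"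
    then have "n \<le> N" by simp
    then show "(\<Sum>k\<le>N. op (smult ((-1)^n * of_nat (n choose k)) (h^k * [:0,1:]^(n-k))) (p n)) = op ((- h - [:0,1:])^n) (p n)"
      by (simp only: opp_psum[symmetric] binom_poly)
  qed
  also have "\<dots> = ev p (- h - [:0,1:])" using N by (simp add: OE_bound)
  finally show ?thesis .
qed

end

context dmod begin

lemma uniq_aux:
  "bnd N p \<Longrightarrow> infinite A \<Longrightarrow> (\<forall>c\<in>A. (\<Sum>n\<le>N. s (c^n) (p n)) = 0) \<Longrightarrow> p m = 0"
proof (induction N arbitrary: p A m)
  case 0
  obtain c where "c \<in> A" using 0(2) by (metis finite.emptyI ex_in_conv)
  then have "(\<Sum>n\<le>0. s (c^n) (p n)) = 0" using 0(3) by blast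
  then have "p 0 = 0" by simp
  then show ?case using 0(1) unfolding bnd_def by (cases m) auto
next
  case (Suc N)
  obtain a where a: "a \<in> A" using Suc(3) by (metis finite.emptyI ex_in_conv)
  define g where "g k = (\<Sum>i\<in>{Suc k..Suc N}. s (a^(i - Suc k)) (p i))" for k
  have gb: "bnd N g" unfolding bnd_def g_def by auto
  have key: "(\<Sum>n\<le>Suc N. s (c^n) (p n)) - (\<Sum>n\<le>Suc N. s (a^n) (p n)) = s (c - a) (\<Sum>k\<le>N. s (c^k) (g k))" for c
  proof -
    have "(\<Sum>n\<le>Suc N. s (c^n) (p n)) - (\<Sum>n\<le>Suc N. s (a^n) (p n)) = (\<Sum>n\<le>Suc N. s (c^n - a^n) (p n))"
      by (simp add: sum_subtractf V.scale_left_diff_distrib)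
    also have "\<dots> = (\<Sum>n\<le>Suc N. s ((c - a) * (\<Sum>i<n. a^(n - Suc i) * c^i)) (p n))"
      by (simp add: power_diff_sumr2)
    also have "\<dots> = s (c - a) (\<Sum>n\<le>Suc N. \<Sum>i<n. s (a^(n - Suc i) * c^i) (p n))"
      by (simp only: V.scale_scale[symmetric] V.scale_sum_left V.scale_sum_right)
    also have "(\<Sum>n\<le>Suc N. \<Sum>i<n. s (a^(n - Suc i) * c^i) (p n)) = (\<Sum>i<Suc N. \<Sum>n\<in>{Suc i..Suc N}. s (a^(n - Suc i) * c^i) (p n))"
      by (rule sum.nested_swap')
    also have "\<dots> = (\<Sum>k\<le>N. s (c^k) (g k))"
      by (simp add: lessThan_Suc_atMost g_def V.scale_sum_right V.scale_right_distrib mult.commute)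
    finally show ?thesis .
  qed
  have "\<forall>c\<in>A - {a}. (\<Sum>k\<le>N. s (c^k) (g k)) = 0"
  proof
    fix c assume c: "c \<in> A - {a}"
    then have "s (c - a) (\<Sum>k\<le>N. s (c^k) (g k)) = 0" using key[of c] Suc(4) a by simp
    then show "(\<Sum>k\<le>N. s (c^k) (g k)) = 0" using c by simp
  qed
  moreover have "infinite (A - {a})" using Suc(3) by simp
  ultimately have g0: "g k = 0" for k using Suc.IH[OF gb] by blast
  have pS: "p (Suc k) = 0" for k
  proof (cases "Suc k \<le> Suc N")
    case True
    have "g k = s (a^0) (p (Suc k)) + (\<Sum>i\<in>{Suc (Suc k)..Suc N}. s (a^(i - Suc k)) (p i))"
      unfolding g_def using True apply (simp add: sum.atLeast_Suc_atMost)
      by (metis le_antisym less_Suc_eq_le)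
    also have "(\<Sum>i\<in>{Suc (Suc k)..Suc N}. s (a^(i - Suc k)) (p i)) = s a (g (Suc k))"
      unfolding g_def V.scale_sum_right
    proof (rule sum.cong[OF refl])
      fix i assume "i \<in> {Suc (Suc k)..Suc N}"
      then have "i - Suc k = Suc (i - Suc (Suc k))" by auto
      then show "s (a^(i - Suc k)) (p i) = s a (s (a ^ (i - Suc (Suc k))) (p i))" by simp
    qed
    finally show ?thesis using g0 by simp
  next
    case False then show ?thesis using Suc(2) unfolding bnd_def by simp
  qed
  have "(\<Sum>n\<le>Suc N. s (a^n) (p n)) = 0" using Suc(4) a by blast
  then have "p 0 = 0" by (subst (asm) sum.atMost_Suc_shift) (simp add: pS)
  then show ?case using pS by (cases m) auto
qed

lemma uniq0: "lpoly p \<Longrightarrow> (\<And>c. ev p [:c:] = 0) \<Longrightarrow> p m = 0"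
proof -
  assume p: "lpoly p" and h: "\<And>c. ev p [:c:] = 0"
  obtain N where N: "bnd N p" using lpoly_bnd p by blast
  show ?thesis
    by (rule uniq_aux[OF N, of UNIV]) (use h N in \<open>simp_all add: OE_const_bound infinite_UNIV_char_0\<close>)
qed

lemma uniq: "lpoly p \<Longrightarrow> lpoly q \<Longrightarrow> (\<And>c. ev p [:c:] = ev q [:c:]) \<Longrightarrow> p = q"
proof
  fix m
  assume p: "lpoly p" and q: "lpoly q" and h: "\<And>c. ev p [:c:] = ev q [:c:]"
  have "(\<lambda>n. p n - q n) m = 0"
    by (rule uniq0) (simp_all add: lpoly_diff p q OE_diff h)
  then show "p m = q m" by simp
qed

lemma GS:
  assumes Fadd: "\<And>v w n. F (v + w) n = F v n + F w n"
    and Fsc: "\<And>c v n. F (s c v) n = s c (F v n)"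
    and Fp: "\<And>v. lpoly (F v)"
    and Fd: "\<And>v n. F (d v) n = d (F v n) + lshift (F v) n"
  shows "ev (F (op g v)) h = op (pcompose g ([:0,1:] + h)) (ev (F v) h)"
proof (induction g)
  case 0
  have "F 0 = (\<lambda>n. 0)" using Fsc[of 0 0] by (auto simp: fun_eq_iff)
  then show ?case by (simp add: opp_0 OE_zero)
next
  case (pCons a g)
  let ?w = "op g v"
  have "F (op (pCons a g) v) = (\<lambda>n. s a (F v n) + (d (F ?w n) + lshift (F ?w) n))"
    by (simp add: opp_pCons Fadd Fsc Fd fun_eq_iff)
  then have "ev (F (op (pCons a g) v)) h = s a (ev (F v) h) + (d (ev (F ?w) h) + op h (ev (F ?w) h))"
    by (simp add: OE_add OE_scale OE_d OE_lshift Fp lpoly_map lpoly_add lpoly_lshift V.scale_zero_right d_zero)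
  also have "\<dots> = op (pcompose (pCons a g) ([:0,1:] + h)) (ev (F v) h)"
    by (simp add: pcompose_pCons opp_padd opp_const opp_mult pCons.IH opp_X)
  finally show ?case .
qed

lemma GS2:
  assumes Fadd: "\<And>v w n. F (v + w) n = F v n + F w n"
    and Fsc: "\<And>c v n. F (s c v) n = s c (F v n)"
    and Fp: "\<And>v. lpoly (F v)"
    and Fd: "\<And>v n. F (d v) n = d (F v n) + lshift (F v) n"
    and p: "lpoly p"
  shows "ev (F (ev p g)) h = ev (\<lambda>n. ev (F (p n)) h) (pcompose g ([:0,1:] + h))"
proof -
  obtain N where N: "bnd N p" using lpoly_bnd p by blast
  have F0: "F 0 = (\<lambda>n. 0)" using Fsc[of 0 0] by (auto simp: fun_eq_iff)
  have Fsum: "F (\<Sum>i\<in>A. f i) = (\<lambda>n. \<Sum>i\<in>A. F (f i) n)" for A f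
    by (induction A rule: infinite_finite_induct) (simp_all add: F0 Fadd fun_eq_iff)
  have "ev (F (ev p g)) h = ev (\<lambda>n. \<Sum>i\<le>N. F (op (g^i) (p i)) n) h"
    by (simp add: OE_bound[OF N] Fsum)
  also have "\<dots> = (\<Sum>i\<le>N. ev (F (op (g^i) (p i))) h)"
    by (rule OE_sum) (simp add: Fp)
  also have "\<dots> = (\<Sum>i\<le>N. op ((pcompose g ([:0,1:] + h))^i) (ev (F (p i)) h))"
    by (simp add: GS[OF Fadd Fsc Fp Fd] pcompose_power_left)
  also have "\<dots> = ev (\<lambda>n. ev (F (p n)) h) (pcompose g ([:0,1:] + h))"
  proof -
    have "bnd N (\<lambda>n. ev (F (p n)) h)" using N by (simp add: bnd_def F0 OE_zero)
    then show ?thesis by (simp add: OE_bound)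
  qed
  finally show ?thesis .
qed

end

lemma tri:
  fixes f :: "nat \<Rightarrow> nat \<Rightarrow> 'a::comm_monoid_add"
  assumes "\<And>i j. f i j \<noteq> 0 \<Longrightarrow> i + j \<le> M \<and> i \<le> N \<and> j \<le> N"
  shows "(\<Sum>k\<le>M. \<Sum>i\<le>k. f i (k - i)) = (\<Sum>i\<le>N. \<Sum>j\<le>N. f i j)"
proof -
  let ?A = "{(i,j). i + j \<le> M}" and ?B = "{..N} \<times> {..N}"
  have fA: "finite ?A" by (rule finite_subset[of _ "{..M} \<times> {..M}"]) auto
  have "(\<Sum>k\<le>M. \<Sum>i\<le>k. f i (k - i)) = (\<Sum>(i,j)\<in>?A. f i j)"
    by (rule sum.triangle_reindex_eq[symmetric])
  also have "\<dots> = (\<Sum>(i,j)\<in>?A \<inter> ?B. f i j)"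
    by (rule sum.mono_neutral_right) (use fA assms in auto)
  also have "\<dots> = (\<Sum>(i,j)\<in>?B. f i j)"
    by (rule sum.mono_neutral_left) (use assms in auto)
  also have "\<dots> = (\<Sum>i\<le>N. \<Sum>j\<le>N. f i j)"
    by (rule sum.cartesian_product[symmetric])
  finally show ?thesis .
qed

context dmod begin

lemma opp_binom: "op ((h + [:c:])^k) v = (\<Sum>q\<le>k. s (of_nat (k choose q) * c^(k-q)) (op (h^q) v))"
  apply (simp add: binomial_ring opp_psum ofnat_smult poly_const_pow opp_smult mult.commute[of _ "[:_:]"] V.scale_scale)
  by (simp add: mult.commute)

lemma AT:
  assumes Q: "\<And>i j. N < i \<or> N < j \<Longrightarrow> Q i j = 0"
  shows "ev (\<lambda>q. ev (\<lambda>p. at_sum s Q p q) [:c:]) h = ev (\<lambda>n. ev (Q n) ([:c:] + h)) [:c:]"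
proof -
  define T where "T q n r = s (c^(n+r) * of_nat ((r+q) choose q)) (op (h^q) (Q n (r+q)))" for q n r
  define U where "U n q r = s (c^n * (of_nat ((q+r) choose q) * c^r)) (op (h^q) (Q n (q+r)))" for n q r
  have b1: "bnd (2*N) (\<lambda>p. at_sum s Q p q)" for q
    unfolding bnd_def at_sum_def
  proof (intro allI impI sum.neutral ballI)
    fix p n assume "2*N < p" "n \<in> {..p}"
    then have "N < n \<or> N < p - n + q" by auto
    then show "s (of_nat ((p - n + q) choose q)) (Q n (p - n + q)) = 0" using Q by auto
  qed
  have b2: "bnd N (\<lambda>q. ev (\<lambda>p. at_sum s Q p q) [:c:])"
    unfolding bnd_def
  proof (intro allI impI)
    fix q assume "N < q"
    have "at_sum s Q p q = 0" for p unfolding at_sum_def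
    proof (intro sum.neutral ballI)
      fix n assume "n \<in> {..p}"
      then have "N < p - n + q" using \<open>N < q\<close> by auto
      then show "s (of_nat ((p - n + q) choose q)) (Q n (p - n + q)) = 0" using Q by simp
    qed
    then have "(\<lambda>p. at_sum s Q p q) = (\<lambda>p. 0)" by auto
    then show "ev (\<lambda>p. at_sum s Q p q) [:c:] = 0" by (simp add: OE_zero)
  qed
  have b3: "bnd N (Q n)" for n using Q by (simp add: bnd_def)
  have b4: "bnd N (\<lambda>n. ev (Q n) ([:c:] + h))"
    unfolding bnd_def
  proof (intro allI impI)
    fix n assume "N < n"
    then have "Q n = (\<lambda>p. 0)" using Q by (auto simp: fun_eq_iff)
    then show "ev (Q n) ([:c:] + h) = 0" by (simp add: OE_zero)
  qed
  have "ev (\<lambda>q. ev (\<lambda>p. at_sum s Q p q) [:c:]) h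
      = (\<Sum>q\<le>N. op (h^q) (\<Sum>p\<le>2*N. s (c^p) (\<Sum>n\<le>p. s (of_nat ((p - n + q) choose q)) (Q n (p - n + q)))))"
    apply (subst OE_bound[OF b2])
    apply (simp only: OE_const_bound[OF b1])
    by (simp only: at_sum_def)
  also have "\<dots> = (\<Sum>q\<le>N. \<Sum>p\<le>2*N. \<Sum>n\<le>p. T q n (p - n))"
    unfolding T_def
    by (auto simp: opp_sum opp_scale V.scale_sum_right V.scale_scale intro!: sum.cong simp del: of_nat_add)
  also have "\<dots> = (\<Sum>q\<le>N. \<Sum>n\<le>N. \<Sum>r\<le>N. T q n r)"
  proof (rule sum.cong[OF refl])
    fix q
    show "(\<Sum>p\<le>2*N. \<Sum>n\<le>p. T q n (p - n)) = (\<Sum>n\<le>N. \<Sum>r\<le>N. T q n r)"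
    proof (rule tri)
      fix n r assume "T q n r \<noteq> 0"
      then have "Q n (r+q) \<noteq> 0" by (auto simp: T_def opp_zero)
      then have "\<not> (N < n \<or> N < r + q)" using Q by blast
      then show "n + r \<le> 2*N \<and> n \<le> N \<and> r \<le> N" by auto
    qed
  qed
  also have "\<dots> = (\<Sum>n\<le>N. \<Sum>q\<le>N. \<Sum>r\<le>N. U n q r)"
    by (subst sum.swap) (simp add: T_def U_def power_add add.commute mult_ac)
  also have "\<dots> = (\<Sum>n\<le>N. \<Sum>k\<le>N. \<Sum>q\<le>k. U n q (k - q))"
  proof (rule sum.cong[OF refl])
    fix n
    show "(\<Sum>q\<le>N. \<Sum>r\<le>N. U n q r) = (\<Sum>k\<le>N. \<Sum>q\<le>k. U n q (k - q))"
    proof (rule tri[symmetric])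
      fix q r assume "U n q r \<noteq> 0"
      then have "Q n (q+r) \<noteq> 0" by (auto simp: U_def opp_zero)
      then have "\<not> (N < n \<or> N < q + r)" using Q by blast
      then show "q + r \<le> N \<and> q \<le> N \<and> r \<le> N" by auto
    qed
  qed
  also have "\<dots> = (\<Sum>n\<le>N. s (c^n) (\<Sum>k\<le>N. op (([:c:] + h)^k) (Q n k)))"
    by (auto simp: U_def opp_binom add.commute[of "[:_:]"] V.scale_sum_right V.scale_scale intro!: sum.cong)
  also have "\<dots> = ev (\<lambda>n. ev (Q n) ([:c:] + h)) [:c:]"
    apply (subst OE_const_bound[OF b4])
    by (simp only: OE_bound[OF b3])
  finally show ?thesis .
qed

end

locale gmod =
  fixes s :: "complex \<Rightarrow> 'v::ab_group_add \<Rightarrow> 'v" and G :: "bool \<Rightarrow> 'v set" and d :: "'v \<Rightarrow> 'v"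
  assumes gm: "graded_cmodule s G d"
begin

lemma gm_vs: "vector_space s" using gm by (simp add: graded_cmodule_def)
lemma gm_dlin: "Vector_Spaces.linear s s d" using gm by (simp add: graded_cmodule_def)

sublocale dmod s d by (rule dmod.intro[OF gm_vs gm_dlin])

lemma gm_sub: "module.subspace s (G i)" using gm by (simp add: graded_cmodule_def)
lemma gm_int: "G False \<inter> G True = {0}" using gm by (simp add: graded_cmodule_def)
lemma gm_dec: "\<exists>a\<in>G False. \<exists>b\<in>G True. v = a + b" using gm by (simp add: graded_cmodule_def)
lemma gm_d: "x \<in> G i \<Longrightarrow> d x \<in> G i" using gm unfolding graded_cmodule_def by blast

lemma mod_s: "module s" using gm_vs by (simp add: module_iff_vector_space)

lemma G_sub: "0 \<in> G i \<and> (\<forall>x\<in>G i. \<forall>y\<in>G i. x + y \<in> G i) \<and> (\<forall>c. \<forall>x\<in>G i. s c x \<in> G i)"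
  using gm_sub[of i] unfolding module.subspace_def[OF mod_s] .
lemma G_zero: "0 \<in> G i" using G_sub by simp
lemma G_add: "x \<in> G i \<Longrightarrow> y \<in> G i \<Longrightarrow> x + y \<in> G i" using G_sub by simp
lemma G_scale: "x \<in> G i \<Longrightarrow> s c x \<in> G i" using G_sub by simp
lemma G_neg: "x \<in> G i \<Longrightarrow> - x \<in> G i"
proof -
  assume "x \<in> G i"
  then have "s (-1) x \<in> G i" by (rule G_scale)
  then show ?thesis by simp
qed
lemma G_diff: "x \<in> G i \<Longrightarrow> y \<in> G i \<Longrightarrow> x - y \<in> G i" using G_add[of x i "-y"] G_neg[of y i] by (simp del: V.scale_minus_left)
lemma G_sum: "(\<And>a. a \<in> A \<Longrightarrow> f a \<in> G i) \<Longrightarrow> (\<Sum>a\<in>A. f a) \<in> G i"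
  by (induction A rule: infinite_finite_induct) (simp_all add: G_zero G_add)
lemma G_dp: "x \<in> G i \<Longrightarrow> (d^^k) x \<in> G i" by (induction k) (simp_all add: gm_d)

lemma G_int: assumes "x \<in> G i" "x \<in> G (\<not> i)" shows "x = 0"
proof -
  have "x \<in> G False \<inter> G True" using assms by (cases i) simp_all
  then show ?thesis using gm_int by blast
qed

lemma comp_ex: "\<exists>u. u \<in> G i \<and> v - u \<in> G (\<not> i)"
proof -
  obtain a b where ab: "a \<in> G False" "b \<in> G True" "v = a + b" using gm_dec by blast
  show ?thesis
  proof (cases i)
    case True then show ?thesis using ab by (intro exI[of _ b]) simp
  next
    case False then show ?thesis using ab by (intro exI[of _ a]) simp
  qed
qed

lemma comp_uniq: "u \<in> G i \<Longrightarrow> v - u \<in> G (\<not> i) \<Longrightarrow> comp G i v = u"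
  unfolding comp_def
proof (rule the_equality)
  fix u' assume u: "u \<in> G i" "v - u \<in> G (\<not> i)" and u': "u' \<in> G i \<and> v - u' \<in> G (\<not> i)"
  have "u' - u \<in> G i" using u u' G_diff by blast
  moreover have "u' - u = (v - u) - (v - u')" by simp
  then have "u' - u \<in> G (\<not> i)" using u u' G_diff by metis
  ultimately have "u' - u = 0" by (rule G_int)
  then show "u' = u" by simp
qed auto

lemma comp_mem: "comp G i v \<in> G i" and comp_rest: "v - comp G i v \<in> G (\<not> i)"
proof -
  obtain u where "u \<in> G i \<and> v - u \<in> G (\<not> i)" using comp_ex by blast
  then have "comp G i v = u" using comp_uniq by blast
  then show "comp G i v \<in> G i" "v - comp G i v \<in> G (\<not> i)" using \<open>u \<in> G i \<and> v - u \<in> G (\<not> i)\<close> by auto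
qed

lemma comp_id: "v \<in> G i \<Longrightarrow> comp G i v = v"
  by (rule comp_uniq) (simp_all add: G_zero)

lemma comp_other: "v \<in> G i \<Longrightarrow> j \<noteq> i \<Longrightarrow> comp G j v = 0"
proof (rule comp_uniq)
  assume "v \<in> G i" "j \<noteq> i"
  then show "v - 0 \<in> G (\<not> j)" by (cases i; cases j) auto
qed (simp add: G_zero)

lemma comp_split: "comp G False v + comp G True v = v"
proof -
  have "v - comp G False v \<in> G True" using comp_rest[of v False] by simp
  then have "comp G True v = v - comp G False v"
    by (intro comp_uniq) (simp_all add: comp_mem)
  then show ?thesis by simp
qed

lemma comp_map:
  assumes "Vector_Spaces.linear s s f" "\<And>x j. x \<in> G j \<Longrightarrow> f x \<in> G j"
  shows "f (comp G i v) = comp G i (f v)"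
proof (rule comp_uniq[symmetric])
  show "f (comp G i v) \<in> G i" using assms(2) comp_mem by blast
  have "f v - f (comp G i v) = f (v - comp G i v)" using linD(5)[OF assms(1)] by simp
  then show "f v - f (comp G i v) \<in> G (\<not> i)" using assms(2) comp_rest by metis
qed

lemma comp_add: "comp G i (v + w) = comp G i v + comp G i w"
proof (rule comp_uniq)
  show "comp G i v + comp G i w \<in> G i" by (simp add: G_add comp_mem)
  have eq: "v + w - (comp G i v + comp G i w) = (v - comp G i v) + (w - comp G i w)" by simp
  show "v + w - (comp G i v + comp G i w) \<in> G (\<not> i)" unfolding eq by (rule G_add[OF comp_rest[of v i] comp_rest[of w i]])
qed

lemma comp_scale: "comp G i (s c v) = s c (comp G i v)"
proof (rule comp_uniq)
  show "s c (comp G i v) \<in> G i" by (simp add: G_scale comp_mem)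
  have "s c v - s c (comp G i v) = s c (v - comp G i v)" by (simp add: V.scale_right_diff_distrib)
  then show "s c v - s c (comp G i v) \<in> G (\<not> i)" using G_scale comp_rest by metis
qed

lemma comp_lin: "Vector_Spaces.linear s s (comp G i)"
  unfolding Vector_Spaces.linear_iff by (simp add: gm_vs comp_add comp_scale)

lemma comp_zero: "comp G i 0 = 0" using linD(3)[OF comp_lin] .

lemma comp_d: "comp G i (d v) = d (comp G i v)"
  by (rule comp_map[symmetric]) (simp_all add: gm_dlin gm_d)

lemma sn_gr: "(\<And>n. p n \<in> G i) \<Longrightarrow> sn p k \<in> G i"
  unfolding subst_neg_def by (intro G_sum G_scale G_dp) auto

lemma OE_gr: "(\<And>n. p n \<in> G i) \<Longrightarrow> (\<And>v. v \<in> G i \<Longrightarrow> op g v \<in> G i)"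
  unfolding opp_def by (intro G_sum G_scale G_dp) auto

end


lemma psign_sym: "psign i j = psign j i" by (auto simp: psign_def)
lemma psign_sq: "psign i j * psign i j = 1" by (auto simp: psign_def)

locale setting =
  fixes sR :: "complex \<Rightarrow> 'r::ab_group_add \<Rightarrow> 'r" and GR :: "bool \<Rightarrow> 'r set"
    and dR :: "'r \<Rightarrow> 'r" and br :: "'r \<Rightarrow> 'r \<Rightarrow> nat \<Rightarrow> 'r"
    and \<alpha> \<beta> :: "'r \<Rightarrow> 'r"
    and sM :: "complex \<Rightarrow> 'm::ab_group_add \<Rightarrow> 'm" and GM :: "bool \<Rightarrow> 'm set"
    and dM :: "'m \<Rightarrow> 'm" and \<rho> :: "'r \<Rightarrow> 'm \<Rightarrow> nat \<Rightarrow> 'm"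
    and \<phi> \<psi> :: "'m \<Rightarrow> 'm"
  assumes R: "bihom_lcsa sR GR dR br \<alpha> \<beta>"
    and reg\<alpha>: "bij \<alpha>" and reg\<beta>: "bij \<beta>"
    and M: "bihom_conf_module sR GR dR br \<alpha> \<beta> sM GM dM \<rho> \<phi> \<psi>"
    and bij\<psi>: "bij \<psi>"
begin

lemma gR: "graded_cmodule sR GR dR" using R unfolding bihom_lcsa_def by simp
lemma gM: "graded_cmodule sM GM dM" using M unfolding bihom_conf_module_def by simp

sublocale Rg: gmod sR GR dR by (rule gmod.intro[OF gR])
sublocale Mg: gmod sM GM dM by (rule gmod.intro[OF gM])

lemma \<alpha>_lin: "Vector_Spaces.linear sR sR \<alpha>" using R unfolding bihom_lcsa_def by simp
lemma \<beta>_lin: "Vector_Spaces.linear sR sR \<beta>" using R unfolding bihom_lcsa_def by simp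
lemma \<alpha>\<beta>: "\<alpha> (\<beta> x) = \<beta> (\<alpha> x)" using R unfolding bihom_lcsa_def by (metis comp_apply)
lemma \<alpha>_gr: "x \<in> GR i \<Longrightarrow> \<alpha> x \<in> GR i"
proof -
  assume "x \<in> GR i"
  moreover have "\<alpha> ` GR i \<subseteq> GR i" using R unfolding bihom_lcsa_def by simp
  ultimately show ?thesis by blast
qed
lemma \<beta>_gr: "x \<in> GR i \<Longrightarrow> \<beta> x \<in> GR i"
proof -
  assume "x \<in> GR i"
  moreover have "\<beta> ` GR i \<subseteq> GR i" using R unfolding bihom_lcsa_def by simp
  ultimately show ?thesis by blast
qed
lemma br_lin1: "Vector_Spaces.linear sR sR (\<lambda>a. br a b n)" using R unfolding bihom_lcsa_def by simp
lemma br_lin2: "Vector_Spaces.linear sR sR (\<lambda>b. br a b n)" using R unfolding bihom_lcsa_def by simp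
lemma br_lp: "lpoly (br a b)" using R unfolding bihom_lcsa_def by simp
lemma br_gr: "a \<in> GR i \<Longrightarrow> b \<in> GR j \<Longrightarrow> br a b n \<in> GR (i \<noteq> j)" using R unfolding bihom_lcsa_def by simp
lemma \<alpha>_d: "\<alpha> (dR x) = dR (\<alpha> x)" using R unfolding bihom_lcsa_def by (metis comp_apply)
lemma \<beta>_d: "\<beta> (dR x) = dR (\<beta> x)" using R unfolding bihom_lcsa_def by (metis comp_apply)
lemma \<alpha>_br: "\<alpha> (br a b n) = br (\<alpha> a) (\<alpha> b) n" using R unfolding bihom_lcsa_def by simp
lemma \<beta>_br: "\<beta> (br a b n) = br (\<beta> a) (\<beta> b) n" using R unfolding bihom_lcsa_def by simp
lemma br_d1: "br (dR a) b n = - lshift (br a b) n" using R unfolding bihom_lcsa_def by simp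
lemma br_d2: "br a (dR b) n = dR (br a b n) + lshift (br a b) n" using R unfolding bihom_lcsa_def by simp
lemma skR: "a \<in> GR i \<Longrightarrow> b \<in> GR j \<Longrightarrow> br (\<beta> a) (\<alpha> b) n = sR (- psign i j) (subst_neg sR dR (br (\<beta> b) (\<alpha> a)) n)"
  using R unfolding bihom_lcsa_def by simp
lemma jacR: "a \<in> GR i \<Longrightarrow> b \<in> GR j \<Longrightarrow> c \<in> GR k \<Longrightarrow>
   br (\<alpha> (\<beta> a)) (br b c q) p = at_sum sR (\<lambda>n. br (br (\<beta> a) b n) (\<beta> c)) p q + sR (psign i j) (br (\<beta> b) (br (\<alpha> a) c p) q)"
  using R unfolding bihom_lcsa_def by simp

lemma \<phi>_lin: "Vector_Spaces.linear sM sM \<phi>" using M unfolding bihom_conf_module_def by simp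
lemma \<psi>_lin: "Vector_Spaces.linear sM sM \<psi>" using M unfolding bihom_conf_module_def by simp
lemma \<phi>_gr: "x \<in> GM i \<Longrightarrow> \<phi> x \<in> GM i"
proof -
  assume "x \<in> GM i"
  moreover have "\<phi> ` GM i \<subseteq> GM i" using M unfolding bihom_conf_module_def by simp
  ultimately show ?thesis by blast
qed
lemma \<psi>_gr: "x \<in> GM i \<Longrightarrow> \<psi> x \<in> GM i"
proof -
  assume "x \<in> GM i"
  moreover have "\<psi> ` GM i \<subseteq> GM i" using M unfolding bihom_conf_module_def by simp
  ultimately show ?thesis by blast
qed
lemma \<rho>_lin1: "Vector_Spaces.linear sR sM (\<lambda>a. \<rho> a m n)" using M unfolding bihom_conf_module_def by simp
lemma \<rho>_lin2: "Vector_Spaces.linear sM sM (\<lambda>m. \<rho> a m n)" using M unfolding bihom_conf_module_def by simp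
lemma \<rho>_lp: "lpoly (\<rho> a m)" using M unfolding bihom_conf_module_def by simp
lemma \<rho>_gr: "a \<in> GR i \<Longrightarrow> m \<in> GM j \<Longrightarrow> \<rho> a m n \<in> GM (i \<noteq> j)" using M unfolding bihom_conf_module_def by simp
lemma \<rho>_d1: "\<rho> (dR a) m n = - lshift (\<rho> a m) n" using M unfolding bihom_conf_module_def by simp
lemma \<rho>_d2: "\<rho> a (dM m) n = dM (\<rho> a m n) + lshift (\<rho> a m) n" using M unfolding bihom_conf_module_def by simp
lemma \<phi>\<psi>: "\<phi> (\<psi> x) = \<psi> (\<phi> x)" using M unfolding bihom_conf_module_def by (metis comp_apply)
lemma \<psi>_d: "\<psi> (dM x) = dM (\<psi> x)" using M unfolding bihom_conf_module_def by (metis comp_apply)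
lemma \<phi>_d: "\<phi> (dM x) = dM (\<phi> x)" using M unfolding bihom_conf_module_def by (metis comp_apply)
lemma \<phi>_\<rho>: "\<phi> (\<rho> a m n) = \<rho> (\<alpha> a) (\<phi> m) n" using M unfolding bihom_conf_module_def by simp
lemma \<psi>_\<rho>: "\<psi> (\<rho> a m n) = \<rho> (\<beta> a) (\<psi> m) n" using M unfolding bihom_conf_module_def by simp
lemma modax: "a \<in> GR i \<Longrightarrow> b \<in> GR j \<Longrightarrow>
  at_sum sM (\<lambda>n. \<rho> (br (\<beta> a) b n) (\<psi> m)) p q = \<rho> (\<alpha> (\<beta> a)) (\<rho> b m q) p - sM (psign i j) (\<rho> (\<beta> b) (\<rho> (\<alpha> a) m p) q)"
  using M unfolding bihom_conf_module_def by simp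

lemmas \<alpha>L = linD[OF \<alpha>_lin] and \<beta>L = linD[OF \<beta>_lin] and \<phi>L = linD[OF \<phi>_lin] and \<psi>L = linD[OF \<psi>_lin]
lemmas \<rho>L1 = linD[OF \<rho>_lin1] and \<rho>L2 = linD[OF \<rho>_lin2] and brL1 = linD[OF br_lin1] and brL2 = linD[OF br_lin2]

lemma \<rho>_0a: "\<rho> 0 m = (\<lambda>n. 0)" using \<rho>L1(3) by (simp add: fun_eq_iff)
lemma \<rho>_0m: "\<rho> a 0 = (\<lambda>n. 0)" using \<rho>L2(3) by (simp add: fun_eq_iff)
lemma br_0a: "br 0 b = (\<lambda>n. 0)" using brL1(3) by (simp add: fun_eq_iff)
lemma br_0b: "br a 0 = (\<lambda>n. 0)" using brL2(3) by (simp add: fun_eq_iff)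

definition "\<alpha>i = inv \<alpha>"
definition "\<psi>i = inv \<psi>"

lemma \<alpha>_\<alpha>i: "\<alpha> (\<alpha>i x) = x" unfolding \<alpha>i_def by (meson bij_inv_eq_iff reg\<alpha>)
lemma \<alpha>i_\<alpha>: "\<alpha>i (\<alpha> x) = x" unfolding \<alpha>i_def by (simp add: inv_f_f bij_is_inj reg\<alpha>)
lemma \<psi>_\<psi>i: "\<psi> (\<psi>i x) = x" unfolding \<psi>i_def by (meson bij_inv_eq_iff bij\<psi>)
lemma \<psi>i_\<psi>: "\<psi>i (\<psi> x) = x" unfolding \<psi>i_def by (simp add: inv_f_f bij_is_inj bij\<psi>)

lemma \<alpha>i_eq: "\<alpha> y = x \<Longrightarrow> \<alpha>i x = y" using \<alpha>i_\<alpha> by blast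
lemma \<psi>i_eq: "\<psi> y = x \<Longrightarrow> \<psi>i x = y" using \<psi>i_\<psi> by blast

lemma \<alpha>i_lin: "Vector_Spaces.linear sR sR \<alpha>i"
  unfolding Vector_Spaces.linear_iff
  by (auto simp: Rg.gm_vs intro!: \<alpha>i_eq simp: \<alpha>L \<alpha>_\<alpha>i)
lemma \<psi>i_lin: "Vector_Spaces.linear sM sM \<psi>i"
  unfolding Vector_Spaces.linear_iff
  by (auto simp: Mg.gm_vs intro!: \<psi>i_eq simp: \<psi>L \<psi>_\<psi>i)
lemmas \<alpha>iL = linD[OF \<alpha>i_lin] and \<psi>iL = linD[OF \<psi>i_lin]

lemma \<alpha>i_d: "\<alpha>i (dR x) = dR (\<alpha>i x)" by (rule \<alpha>i_eq) (simp add: \<alpha>_d \<alpha>_\<alpha>i)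
lemma \<psi>i_d: "\<psi>i (dM x) = dM (\<psi>i x)" by (rule \<psi>i_eq) (simp add: \<psi>_d \<psi>_\<psi>i)
lemma \<alpha>i_br: "\<alpha>i (br a b n) = br (\<alpha>i a) (\<alpha>i b) n" by (rule \<alpha>i_eq) (simp add: \<alpha>_br \<alpha>_\<alpha>i)
lemma \<alpha>i_\<beta>: "\<alpha>i (\<beta> x) = \<beta> (\<alpha>i x)" by (rule \<alpha>i_eq) (simp add: \<alpha>\<beta> \<alpha>_\<alpha>i)
lemma \<psi>i_\<phi>: "\<psi>i (\<phi> x) = \<phi> (\<psi>i x)" by (rule \<psi>i_eq) (simp add: \<phi>\<psi>[symmetric] \<psi>_\<psi>i)
lemma \<psi>i_\<rho>: "\<psi>i (\<rho> (\<beta> a) m n) = \<rho> a (\<psi>i m) n" by (rule \<psi>i_eq) (simp add: \<psi>_\<rho> \<psi>_\<psi>i)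

lemma \<alpha>i_gr: assumes "x \<in> GR i" shows "\<alpha>i x \<in> GR i"
proof -
  have "comp GR (\<not> i) (\<alpha>i x) = \<alpha>i (\<alpha> (comp GR (\<not> i) (\<alpha>i x)))" by (simp add: \<alpha>i_\<alpha>)
  also have "\<alpha> (comp GR (\<not> i) (\<alpha>i x)) = comp GR (\<not> i) (\<alpha> (\<alpha>i x))"
    by (rule Rg.comp_map[OF \<alpha>_lin \<alpha>_gr])
  also have "\<dots> = 0" using assms by (simp add: \<alpha>_\<alpha>i Rg.comp_other)
  finally have z: "comp GR (\<not> i) (\<alpha>i x) = 0" by (simp add: \<alpha>iL)
  have "\<alpha>i x = comp GR i (\<alpha>i x)" using Rg.comp_split[of "\<alpha>i x"] z by (cases i) simp_all
  then show ?thesis using Rg.comp_mem by metis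
qed

lemma \<psi>i_gr: assumes "x \<in> GM i" shows "\<psi>i x \<in> GM i"
proof -
  have "comp GM (\<not> i) (\<psi>i x) = \<psi>i (\<psi> (comp GM (\<not> i) (\<psi>i x)))" by (simp add: \<psi>i_\<psi>)
  also have "\<psi> (comp GM (\<not> i) (\<psi>i x)) = comp GM (\<not> i) (\<psi> (\<psi>i x))"
    by (rule Mg.comp_map[OF \<psi>_lin \<psi>_gr])
  also have "\<dots> = 0" using assms by (simp add: \<psi>_\<psi>i Mg.comp_other)
  finally have z: "comp GM (\<not> i) (\<psi>i x) = 0" by (simp add: \<psi>iL)
  have "\<psi>i x = comp GM i (\<psi>i x)" using Mg.comp_split[of "\<psi>i x"] z by (cases i) simp_all
  then show ?thesis using Mg.comp_mem by metis
qed

end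

context setting begin

definition "tm r m = \<rho> (\<alpha>i (\<beta> r)) (\<phi> (\<psi>i m))"
definition "K x y n = (\<Sum>i\<in>UNIV. \<Sum>j\<in>UNIV. sM (psign i j) (Mg.sn (tm (comp GR i (fst y)) (comp GM j (snd x))) n))"

abbreviation "PS \<equiv> prod_scale sR sM"
abbreviation "PG \<equiv> prod_grading GR GM"
abbreviation "PD \<equiv> map_prod dR dM"
abbreviation "PB \<equiv> sd_bracket GR br \<alpha> \<beta> sM GM dM \<rho> \<phi> \<psi>"
abbreviation "P\<alpha> \<equiv> map_prod \<alpha> \<phi>"
abbreviation "P\<beta> \<equiv> map_prod \<beta> \<psi>"

lemma PB_eq: "PB x y n = (br (fst x) (fst y) n, \<rho> (fst x) (snd y) n - K x y n)"
  by (simp add: sd_bracket_def K_def tm_def \<alpha>i_def \<psi>i_def)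

lemma tm_lp: "lpoly (tm r m)" by (simp add: tm_def \<rho>_lp)

lemma tm_addr: "tm (r + r') m = (\<lambda>n. tm r m n + tm r' m n)"
  by (simp add: tm_def fun_eq_iff \<beta>L \<alpha>iL \<rho>L1)
lemma tm_scaler: "tm (sR c r) m = (\<lambda>n. sM c (tm r m n))"
  by (simp add: tm_def fun_eq_iff \<beta>L \<alpha>iL \<rho>L1)
lemma tm_addm: "tm r (m + m') = (\<lambda>n. tm r m n + tm r m' n)"
  by (simp add: tm_def fun_eq_iff \<phi>L \<psi>iL \<rho>L2)
lemma tm_scalem: "tm r (sM c m) = (\<lambda>n. sM c (tm r m n))"
  by (simp add: tm_def fun_eq_iff \<phi>L \<psi>iL \<rho>L2)
lemma tm_0r: "tm 0 m = (\<lambda>n. 0)"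
  by (simp add: tm_def fun_eq_iff \<beta>L \<alpha>iL \<rho>L1)
lemma tm_0m: "tm r 0 = (\<lambda>n. 0)"
  by (simp add: tm_def fun_eq_iff \<phi>L \<psi>iL \<rho>L2)

lemma tm_gr: "r \<in> GR i \<Longrightarrow> m \<in> GM j \<Longrightarrow> tm r m n \<in> GM (i \<noteq> j)"
  unfolding tm_def by (intro \<rho>_gr \<alpha>i_gr \<beta>_gr \<phi>_gr \<psi>i_gr)

lemma vsP: "vector_space PS"
  unfolding vector_space_def prod_scale_def
  by (simp add: Rg.V.scale_right_distrib Mg.V.scale_right_distrib Rg.V.scale_left_distrib Mg.V.scale_left_distrib)

lemma linP:
  assumes "\<And>x y. f (x + y) = f x + f y" "\<And>c x. f (PS c x) = PS c (f x)"
  shows "Vector_Spaces.linear PS PS f"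
  unfolding Vector_Spaces.linear_iff using assms vsP by blast

lemma PS_fst[simp]: "fst (PS c x) = sR c (fst x)" and PS_snd[simp]: "snd (PS c x) = sM c (snd x)"
  by (simp_all add: prod_scale_def)

lemma sn_tm_lp: "lpoly (Mg.sn (tm r m))" by (simp add: Mg.subst_lpoly tm_lp)

lemma K_addx: "K (x + x') y n = K x y n + K x' y n"
  by (simp add: K_def Mg.comp_add tm_addm Mg.subst_add tm_lp Mg.V.scale_right_distrib sum.distrib)
lemma K_scalex: "K (PS c x) y n = sM c (K x y n)"
  by (simp add: K_def Mg.comp_scale tm_scalem Mg.subst_scale tm_lp Mg.V.scale_sum_right mult.commute)
lemma K_addy: "K x (y + y') n = K x y n + K x y' n"
  by (simp add: K_def Rg.comp_add tm_addr Mg.subst_add tm_lp Mg.V.scale_right_distrib sum.distrib)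
lemma K_scaley: "K x (PS c y) n = sM c (K x y n)"
  by (simp add: K_def Rg.comp_scale tm_scaler Mg.subst_scale tm_lp Mg.V.scale_sum_right mult.commute)

lemma K_lp: "lpoly (K x y)"
  unfolding K_def
  by (intro lpoly_sum lpoly_map[of "sM _"]) (simp_all add: sn_tm_lp)

lemma K_hom:
  assumes "fst y \<in> GR j" "snd x \<in> GM i"
  shows "K x y n = sM (psign j i) (Mg.sn (tm (fst y) (snd x)) n)"
proof -
  have c1: "comp GR j' (fst y) = (if j' = j then fst y else 0)" for j'
    using assms by (simp add: Rg.comp_id Rg.comp_other)
  have c2: "comp GM i' (snd x) = (if i' = i then snd x else 0)" for i'
    using assms by (simp add: Mg.comp_id Mg.comp_other)
  show ?thesis
    unfolding K_def c1 c2 UNIV_bool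
    by (cases i; cases j) (simp_all add: tm_0r tm_0m Mg.subst_zero)
qed

lemma K_gr:
  assumes "fst y \<in> GR j" "snd x \<in> GM i"
  shows "K x y n \<in> GM (j \<noteq> i)"
  unfolding K_hom[OF assms] by (intro Mg.G_scale Mg.sn_gr tm_gr assms)

end

context setting begin

lemma memPG: "x \<in> PG i \<longleftrightarrow> fst x \<in> GR i \<and> snd x \<in> GM i"
  by (cases x) (simp add: prod_grading_def)

lemma modP: "module PS" using vsP by (simp add: module_iff_vector_space)

lemma G1: "graded_cmodule PS PG PD"
  unfolding graded_cmodule_def
proof (intro conjI allI)
  show "vector_space PS" by (rule vsP)
  fix \<theta>
  show "module.subspace PS (PG \<theta>)"
    unfolding module.subspace_def[OF modP]
    by (auto simp: memPG Rg.G_zero Mg.G_zero Rg.G_add Mg.G_add Rg.G_scale Mg.G_scale)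
next
  show "PG False \<inter> PG True = {0}"
  proof
    show "PG False \<inter> PG True \<subseteq> {0}"
    proof
      fix x assume "x \<in> PG False \<inter> PG True"
      then have "fst x = 0" "snd x = 0" using Rg.G_int[of "fst x" False] Mg.G_int[of "snd x" False] by (simp_all add: memPG)
      then show "x \<in> {0}" by (simp add: prod_eq_iff)
    qed
    show "{0} \<subseteq> PG False \<inter> PG True" by (simp add: memPG Rg.G_zero Mg.G_zero)
  qed
next
  fix v :: "'r \<times> 'm"
  obtain a b where ab: "a \<in> GR False" "b \<in> GR True" "fst v = a + b" using Rg.gm_dec by blast
  obtain a' b' where ab': "a' \<in> GM False" "b' \<in> GM True" "snd v = a' + b'" using Mg.gm_dec by blast
  show "\<exists>a\<in>PG False. \<exists>b\<in>PG True. v = a + b"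
    by (rule bexI[of _ "(a, a')"], rule bexI[of _ "(b, b')"]) (use ab ab' in \<open>simp_all add: memPG prod_eq_iff\<close>)
next
  show "Vector_Spaces.linear PS PS PD"
    by (rule linP) (simp_all add: prod_eq_iff map_prod_def split_def Rg.d_add Mg.d_add Rg.d_scale Mg.d_scale prod_scale_def)
next
  fix \<theta> show "PD ` PG \<theta> \<subseteq> PG \<theta>"
    by (auto simp: memPG Rg.gm_d Mg.gm_d)
qed

lemma G2: "Vector_Spaces.linear PS PS P\<alpha>"
  by (rule linP) (simp_all add: prod_eq_iff map_prod_def split_def \<alpha>L \<phi>L prod_scale_def)
lemma G3: "Vector_Spaces.linear PS PS P\<beta>"
  by (rule linP) (simp_all add: prod_eq_iff map_prod_def split_def \<beta>L \<psi>L prod_scale_def)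
lemma G4: "P\<alpha> \<circ> P\<beta> = P\<beta> \<circ> P\<alpha>"
  by (simp add: fun_eq_iff \<alpha>\<beta> \<phi>\<psi>)
lemma G5: "P\<alpha> ` PG \<theta> \<subseteq> PG \<theta> \<and> P\<beta> ` PG \<theta> \<subseteq> PG \<theta>"
  by (auto simp: memPG \<alpha>_gr \<beta>_gr \<phi>_gr \<psi>_gr)

lemma G6: "Vector_Spaces.linear PS PS (\<lambda>a. PB a b n)"
  by (rule linP) (simp_all add: prod_eq_iff PB_eq brL1 \<rho>L1 K_addx K_scalex Mg.V.scale_right_diff_distrib)
lemma G7: "Vector_Spaces.linear PS PS (\<lambda>b. PB a b n)"
  by (rule linP) (simp_all add: prod_eq_iff PB_eq brL2 \<rho>L2 K_addy K_scaley Mg.V.scale_right_diff_distrib)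

lemma G8: "lpoly (PB a b)"
proof -
  have "lpoly (\<lambda>n. \<rho> (fst a) (snd b) n - K a b n)" by (rule lpoly_diff[OF \<rho>_lp K_lp])
  then show ?thesis using br_lp[of "fst a" "fst b"] unfolding lpoly_def PB_eq
    by (rule finite_subset[rotated, OF finite_UnI]) (auto simp: prod_eq_iff)
qed

lemma G9: assumes "a \<in> PG i" "b \<in> PG j" shows "PB a b n \<in> PG (i \<noteq> j)"
proof -
  have h: "fst a \<in> GR i" "snd a \<in> GM i" "fst b \<in> GR j" "snd b \<in> GM j" using assms by (simp_all add: memPG)
  have "K a b n \<in> GM (j \<noteq> i)" using K_gr h by blast
  moreover have "(j \<noteq> i) = (i \<noteq> j)" by auto
  ultimately have "K a b n \<in> GM (i \<noteq> j)" by simp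
  moreover have "br (fst a) (fst b) n \<in> GR (i \<noteq> j)" by (rule br_gr[OF h(1) h(3)])
  moreover have "\<rho> (fst a) (snd b) n \<in> GM (i \<noteq> j)" by (rule \<rho>_gr[OF h(1) h(4)])
  ultimately show ?thesis unfolding memPG PB_eq fst_conv snd_conv by (intro conjI Mg.G_diff)
qed

lemma G10: "P\<alpha> \<circ> PD = PD \<circ> P\<alpha>" by (simp add: fun_eq_iff \<alpha>_d \<phi>_d)
lemma G11: "P\<beta> \<circ> PD = PD \<circ> P\<beta>" by (simp add: fun_eq_iff \<beta>_d \<psi>_d)

lemma \<phi>_tm: "\<phi> (tm r m n) = tm (\<alpha> r) (\<phi> m) n"
  by (simp add: tm_def \<phi>_\<rho> \<alpha>_\<alpha>i \<alpha>i_\<beta> \<alpha>\<beta> \<alpha>i_\<alpha> \<psi>i_\<phi>)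
lemma \<psi>_tm: "\<psi> (tm r m n) = tm (\<beta> r) (\<psi> m) n"
  by (simp add: tm_def \<psi>_\<rho> \<alpha>i_\<beta> \<phi>\<psi>[symmetric] \<psi>_\<psi>i \<psi>i_\<psi>)

lemma \<phi>_K: "\<phi> (K x y n) = K (P\<alpha> x) (P\<alpha> y) n"
  unfolding K_def
  by (simp add: \<phi>L Mg.subst_comm[OF \<phi>_lin \<phi>_d tm_lp] \<phi>_tm Rg.comp_map[OF \<alpha>_lin \<alpha>_gr] Mg.comp_map[OF \<phi>_lin \<phi>_gr])
lemma \<psi>_K: "\<psi> (K x y n) = K (P\<beta> x) (P\<beta> y) n"
  unfolding K_def
  by (simp add: \<psi>L Mg.subst_comm[OF \<psi>_lin \<psi>_d tm_lp] \<psi>_tm Rg.comp_map[OF \<beta>_lin \<beta>_gr] Mg.comp_map[OF \<psi>_lin \<psi>_gr])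

lemma G12: "P\<alpha> (PB a b n) = PB (P\<alpha> a) (P\<alpha> b) n"
  by (simp add: PB_eq \<alpha>_br \<phi>L \<phi>_\<rho> \<phi>_K)
lemma G13: "P\<beta> (PB a b n) = PB (P\<beta> a) (P\<beta> b) n"
  by (simp add: PB_eq \<beta>_br \<psi>L \<psi>_\<rho> \<psi>_K)

end

context dmod begin

lemma sn_dl: assumes p: "lpoly p" shows "sn (\<lambda>k. d (p k) + lshift p k) = (\<lambda>k. - lshift (sn p) k)"
proof (rule uniq)
  have lp1: "lpoly (\<lambda>k. d (p k))" by (rule lpoly_map[where f=d, OF d_zero p])
  show "lpoly (sn (\<lambda>k. d (p k) + lshift p k))" by (intro subst_lpoly lpoly_add lp1 lpoly_lshift p)
  show "lpoly (\<lambda>k. - lshift (sn p) k)" by (intro lpoly_neg lpoly_lshift subst_lpoly p)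
  fix c
  show "ev (sn (\<lambda>k. d (p k) + lshift p k)) [:c:] = ev (\<lambda>k. - lshift (sn p) k) [:c:]"
    using p lp1
    by (simp add: OE_subst lpoly_add lpoly_lshift OE_add OE_d OE_lshift OE_neg subst_lpoly
        opp_pdiff opp_pminus opp_const opp_X opp_pCons d_scale opp_0 d_zero d_diff d_neg)
qed

lemma sn_l: assumes p: "lpoly p" shows "sn (\<lambda>k. - lshift p k) = (\<lambda>k. d (sn p k) + lshift (sn p) k)"
proof (rule uniq)
  have lp1: "lpoly (\<lambda>k. d (sn p k))" by (rule lpoly_map[where f=d, OF d_zero subst_lpoly[OF p]])
  show "lpoly (sn (\<lambda>k. - lshift p k))" by (intro subst_lpoly lpoly_neg lpoly_lshift p)
  show "lpoly (\<lambda>k. d (sn p k) + lshift (sn p) k)" by (intro lpoly_add lp1 lpoly_lshift subst_lpoly p)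
  fix c
  show "ev (sn (\<lambda>k. - lshift p k)) [:c:] = ev (\<lambda>k. d (sn p k) + lshift (sn p) k) [:c:]"
    using p lp1
    by (simp add: OE_subst lpoly_neg lpoly_lshift OE_add OE_d OE_lshift OE_neg subst_lpoly
        opp_pdiff opp_pminus opp_const opp_X opp_pCons d_scale opp_0 d_zero d_diff d_neg)
qed

end

context setting begin

lemma tm_dm: "tm r (dM m) = (\<lambda>k. dM (tm r m k) + lshift (tm r m) k)"
  by (simp add: tm_def \<psi>i_d \<phi>_d \<rho>_d2 fun_eq_iff)
lemma tm_dr: "tm (dR r) m = (\<lambda>k. - lshift (tm r m) k)"
  by (simp add: tm_def \<beta>_d \<alpha>i_d \<rho>_d1 fun_eq_iff)

lemma K_dx: "K (PD x) y n = - lshift (K x y) n"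
proof -
  have "K (PD x) y n = (\<Sum>i\<in>UNIV. \<Sum>j\<in>UNIV. sM (psign i j) (- lshift (Mg.sn (tm (comp GR i (fst y)) (comp GM j (snd x)))) n))"
    unfolding K_def by (simp add: Mg.comp_d tm_dm Mg.sn_dl tm_lp)
  then show ?thesis by (cases n) (simp_all add: lshift_def K_def sum_negf)
qed

lemma K_dy: "K x (PD y) n = dM (K x y n) + lshift (K x y) n"
proof -
  have "K x (PD y) n = (\<Sum>i\<in>UNIV. \<Sum>j\<in>UNIV. sM (psign i j) (dM (Mg.sn (tm (comp GR i (fst y)) (comp GM j (snd x))) n) + lshift (Mg.sn (tm (comp GR i (fst y)) (comp GM j (snd x)))) n))"
    unfolding K_def by (simp add: Rg.comp_d tm_dr Mg.sn_l tm_lp)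
  then show ?thesis
    by (cases n) (simp_all add: lshift_def K_def Mg.d_sum Mg.d_scale Mg.V.scale_right_distrib sum.distrib)
qed

lemma G14: "PB (PD a) b n = - lshift (PB a b) n"
  by (cases n) (simp_all add: PB_eq br_d1 \<rho>_d1 K_dx lshift_def prod_eq_iff)

lemma G15: "PB a (PD b) n = PD (PB a b n) + lshift (PB a b) n"
  by (cases n) (simp_all add: PB_eq br_d2 \<rho>_d2 K_dy lshift_def prod_eq_iff Mg.d_diff)

end

context dmod begin
lemma sn_sn: assumes p: "lpoly p" shows "sn (sn p) = p"
proof (rule uniq)
  show "lpoly (sn (sn p))" by (intro subst_lpoly p)
  show "lpoly p" by fact
  fix c show "ev (sn (sn p)) [:c:] = ev p [:c:]"
    using p by (simp add: OE_subst subst_lpoly)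
qed
end

context setting begin

lemma dmP: "dmod PS PD" by (rule dmod.intro[OF vsP]) (use G1 in \<open>simp add: graded_cmodule_def\<close>)

lemma sn_prod: assumes "lpoly p"
  shows "subst_neg PS PD p k = (Rg.sn (\<lambda>n. fst (p n)) k, Mg.sn (\<lambda>n. snd (p n)) k)"
proof -
  obtain N where N: "bnd N p" using lpoly_bnd assms by blast
  have N1: "bnd N (\<lambda>n. fst (p n))" "bnd N (\<lambda>n. snd (p n))" using N by (auto simp: bnd_def)
  have pw: "(PD^^j) x = ((dR^^j) (fst x), (dM^^j) (snd x))" for j x by (induction j) auto
  show ?thesis
    by (simp add: dmod.subst_bound[OF dmP N] Rg.subst_bound[OF N1(1)] Mg.subst_bound[OF N1(2)] pw
        fst_sum snd_sum prod_scale_def prod_eq_iff)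
qed

lemma PB_hom:
  assumes "x \<in> PG i" "y \<in> PG j"
  shows "PB x y n = (br (fst x) (fst y) n, \<rho> (fst x) (snd y) n - sM (psign j i) (Mg.sn (tm (fst y) (snd x)) n))"
  using assms by (simp add: PB_eq memPG K_hom)

lemma tm_\<alpha>\<psi>: "tm (\<alpha> r) (\<psi> m) = \<rho> (\<beta> r) (\<phi> m)"
  by (simp add: tm_def \<alpha>i_\<beta> \<alpha>i_\<alpha> \<psi>i_\<psi>)

lemma G16:
  assumes a: "a \<in> PG i" and b: "b \<in> PG j"
  shows "PB (P\<beta> a) (P\<alpha> b) n = PS (- psign i j) (subst_neg PS PD (PB (P\<beta> b) (P\<alpha> a)) n)"
proof -
  have a1: "P\<beta> a \<in> PG i" "P\<alpha> a \<in> PG i" using a G5 by blast+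
  have b1: "P\<beta> b \<in> PG j" "P\<alpha> b \<in> PG j" using b G5 by blast+
  obtain r m where am: "a = (r, m)" by (cases a)
  obtain r' m' where bm: "b = (r', m')" by (cases b)
  have r: "r \<in> GR i" and r': "r' \<in> GR j" using a b am bm by (simp_all add: memPG)
  have lp1: "lpoly (\<lambda>k. sM (psign i j) (Mg.sn (\<rho> (\<beta> r) (\<phi> m')) k))"
    by (intro lpoly_map[where f="sM _"] Mg.subst_lpoly \<rho>_lp) simp
  have "PB (P\<beta> b) (P\<alpha> a) = (\<lambda>k. (br (\<beta> r') (\<alpha> r) k, \<rho> (\<beta> r') (\<phi> m) k - sM (psign i j) (Mg.sn (\<rho> (\<beta> r) (\<phi> m')) k)))"
    using PB_hom[OF b1(1) a1(2)] am bm by (simp add: fun_eq_iff tm_\<alpha>\<psi>)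
  then have "subst_neg PS PD (PB (P\<beta> b) (P\<alpha> a)) n =
      (Rg.sn (br (\<beta> r') (\<alpha> r)) n, Mg.sn (\<rho> (\<beta> r') (\<phi> m)) n - sM (psign i j) (\<rho> (\<beta> r) (\<phi> m') n))"
    using G8[of "P\<beta> b" "P\<alpha> a"] lp1
    by (simp add: sn_prod \<rho>_lp Mg.subst_diff Mg.subst_scale Mg.subst_lpoly Mg.sn_sn)
  moreover have "PB (P\<beta> a) (P\<alpha> b) n = (br (\<beta> r) (\<alpha> r') n, \<rho> (\<beta> r) (\<phi> m') n - sM (psign j i) (Mg.sn (\<rho> (\<beta> r') (\<phi> m)) n))"
    using PB_hom[OF a1(1) b1(2)] am bm by (simp add: tm_\<alpha>\<psi>)
  ultimately show ?thesis
    using skR[OF r r', of n]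
    by (simp add: prod_scale_def psign_sym[of j i] Mg.V.scale_right_diff_distrib psign_sq)
qed

end

definition bnd2 :: "nat \<Rightarrow> (nat \<Rightarrow> nat \<Rightarrow> 'v::zero) \<Rightarrow> bool" where
  "bnd2 N F \<longleftrightarrow> (\<forall>p q. N < p \<or> N < q \<longrightarrow> F p q = 0)"

lemma bnd2_mono: "bnd2 N F \<Longrightarrow> N \<le> M \<Longrightarrow> bnd2 M F"
  unfolding bnd2_def by auto

lemma bnd2_add: "bnd2 N F \<Longrightarrow> bnd2 M G \<Longrightarrow> bnd2 (max N M) (\<lambda>p q. F p q + (G p q :: 'v::monoid_add))"
  unfolding bnd2_def by auto

lemma bnd2_diff: "bnd2 N F \<Longrightarrow> bnd2 M G \<Longrightarrow> bnd2 (max N M) (\<lambda>p q. F p q - (G p q :: 'v::group_add))"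
  unfolding bnd2_def by auto

lemma bnd2_map: "f 0 = 0 \<Longrightarrow> bnd2 N F \<Longrightarrow> bnd2 N (\<lambda>p q. f (F p q))"
  unfolding bnd2_def by auto

lemma bnd2_from:
  assumes z: "\<And>q p. N1 < q \<Longrightarrow> F p q = (0::'v::zero)" and l: "\<And>q. lpoly (\<lambda>p. F p q)"
  shows "\<exists>N. bnd2 N F"
proof -
  have "\<forall>q. \<exists>B. bnd B (\<lambda>p. F p q)" using l lpoly_bnd by blast
  then obtain B where B: "\<And>q. bnd (B q) (\<lambda>p. F p q)" by metis
  define N where "N = max N1 (Max (B ` {..N1}))"
  have "bnd2 N F" unfolding bnd2_def
  proof (intro allI impI)
    fix p q assume h: "N < p \<or> N < q"
    show "F p q = 0"
    proof (cases "N1 < q")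
      case True then show ?thesis by (rule z)
    next
      case False
      then have "B q \<le> Max (B ` {..N1})" by (intro Max_ge) auto
      then have "B q \<le> N" unfolding N_def by linarith
      moreover have "N < p" using h False N_def by auto
      ultimately show ?thesis using B[of q] unfolding bnd_def by auto
    qed
  qed
  then show ?thesis by blast
qed

lemma bnd2_from':
  assumes z: "\<And>q p. N1 < p \<Longrightarrow> F p q = (0::'v::zero)" and l: "\<And>p. lpoly (\<lambda>q. F p q)"
  shows "\<exists>N. bnd2 N F"
proof -
  obtain N where "bnd2 N (\<lambda>q p. F p q)" using bnd2_from[of N1 "\<lambda>q p. F p q"] z l by blast
  then have "bnd2 N F" unfolding bnd2_def by blast
  then show ?thesis by blast
qed

lemma bnd2_lp1: "bnd2 N F \<Longrightarrow> lpoly (\<lambda>p. F p q)"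
  by (rule bnd_lpoly[of N]) (simp add: bnd_def bnd2_def)
lemma bnd2_lp2: "bnd2 N F \<Longrightarrow> lpoly (\<lambda>q. F p q)"
  by (rule bnd_lpoly[of N]) (simp add: bnd_def bnd2_def)

context dmod begin

lemma at_sum_bnd2: "bnd2 N Q \<Longrightarrow> bnd2 (2*N) (at_sum s Q)"
  unfolding bnd2_def at_sum_def
proof (intro allI impI sum.neutral ballI)
  fix p q n assume Q: "\<forall>p q. N < p \<or> N < q \<longrightarrow> Q p q = 0" and h: "2*N < p \<or> 2*N < q" "n \<in> {..p}"
  then have "N < n \<or> N < p - n + q" by auto
  then show "s (of_nat ((p - n + q) choose q)) (Q n (p - n + q)) = 0" using Q by auto
qed

lemma Ev2_swap: "bnd2 N F \<Longrightarrow> ev (\<lambda>q. ev (\<lambda>p. F p q) [:c:]) [:e:] = ev (\<lambda>p. ev (\<lambda>q. F p q) [:e:]) [:c:]"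
proof -
  assume F: "bnd2 N F"
  have b1: "bnd N (\<lambda>p. F p q)" "bnd N (\<lambda>q. F p q)" for p q using F by (auto simp: bnd_def bnd2_def)
  have b2a: "bnd N (\<lambda>q. ev (\<lambda>p. F p q) [:c:])"
    using F by (auto simp: bnd_def bnd2_def OE_zero)
  have b2b: "bnd N (\<lambda>p. ev (\<lambda>q. F p q) [:e:])"
    unfolding bnd_def
  proof (intro allI impI)
    fix p assume "N < p"
    then have "(\<lambda>q. F p q) = (\<lambda>q. 0)" using F by (auto simp: bnd2_def)
    then show "ev (\<lambda>q. F p q) [:e:] = 0" by (simp add: OE_zero)
  qed
  note b2 = b2a b2b
  show ?thesis
    apply (subst OE_const_bound[OF b2(1)], subst OE_const_bound[OF b2(2)])
    apply (simp only: OE_const_bound[OF b1(1)] OE_const_bound[OF b1(2)])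
    apply (simp add: V.scale_sum_right)
    apply (subst sum.swap)
    by (simp add: mult.commute)
qed

lemma uniq2:
  assumes F: "bnd2 N F" and G: "bnd2 M G"
    and h: "\<And>c e. ev (\<lambda>q. ev (\<lambda>p. F p q) [:c:]) [:e:] = ev (\<lambda>q. ev (\<lambda>p. G p q) [:c:]) [:e:]"
  shows "F p q = G p q"
proof -
  have l1: "lpoly (\<lambda>q. ev (\<lambda>p. F p q) [:c:])" for c
    by (rule bnd_lpoly[of N]) (use F in \<open>auto simp: bnd_def bnd2_def OE_zero\<close>)
  have l2: "lpoly (\<lambda>q. ev (\<lambda>p. G p q) [:c:])" for c
    by (rule bnd_lpoly[of M]) (use G in \<open>auto simp: bnd_def bnd2_def OE_zero\<close>)
  have "(\<lambda>q. ev (\<lambda>p. F p q) [:c:]) = (\<lambda>q. ev (\<lambda>p. G p q) [:c:])" for c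
    by (rule uniq[OF l1 l2 h])
  then have "ev (\<lambda>p. F p q) [:c:] = ev (\<lambda>p. G p q) [:c:]" for c by metis
  then have "(\<lambda>p. F p q) = (\<lambda>p. G p q)"
    by (intro uniq bnd2_lp1[OF F] bnd2_lp1[OF G])
  then show ?thesis by metis
qed

end

context dmod begin

definition "E2 F c e = ev (\<lambda>q. ev (\<lambda>p. F p q) [:c:]) [:e:]"

lemma E2_lp: "bnd2 N A \<Longrightarrow> lpoly (\<lambda>q. ev (\<lambda>p. A p q) [:c:])"
  by (rule bnd_lpoly[of N]) (auto simp: bnd_def bnd2_def OE_zero)

lemma E2_add: "bnd2 N A \<Longrightarrow> bnd2 M B \<Longrightarrow> E2 (\<lambda>p q. A p q + B p q) c e = E2 A c e + E2 B c e"
  unfolding E2_def by (simp add: OE_add bnd2_lp1 E2_lp)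
lemma E2_diff: "bnd2 N A \<Longrightarrow> bnd2 M B \<Longrightarrow> E2 (\<lambda>p q. A p q - B p q) c e = E2 A c e - E2 B c e"
  unfolding E2_def by (simp add: OE_diff bnd2_lp1 E2_lp)
lemma E2_scale: "bnd2 N A \<Longrightarrow> E2 (\<lambda>p q. s a (A p q)) c e = s a (E2 A c e)"
  unfolding E2_def by (simp add: OE_scale bnd2_lp1 E2_lp)

lemma uniq2': "bnd2 N F \<Longrightarrow> bnd2 M G \<Longrightarrow> (\<And>c e. E2 F c e = E2 G c e) \<Longrightarrow> F p q = G p q"
  unfolding E2_def by (rule uniq2)

end

context setting begin

lemma GS\<rho>: "lpoly P \<Longrightarrow> Mg.ev (\<rho> z (Mg.ev P g)) h = Mg.ev (\<lambda>n. Mg.ev (\<rho> z (P n)) h) (pcompose g ([:0,1:] + h))"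
  by (rule Mg.GS2) (simp_all add: \<rho>L2 \<rho>_lp \<rho>_d2)

lemma LIN\<rho>: assumes "lpoly P" shows "Mg.ev (\<lambda>p. \<rho> z (P p) q) [:c:] = \<rho> z (Mg.ev P [:c:]) q"
proof -
  obtain N where N: "bnd N P" using lpoly_bnd assms by blast
  have B: "bnd N (\<lambda>p. \<rho> z (P p) q)" using N by (simp add: bnd_def \<rho>L2)
  show ?thesis by (simp add: Mg.OE_const_bound[OF N] Mg.OE_const_bound[OF B] \<rho>L2)
qed

lemma sn_\<rho>_lp: "lpoly (Mg.sn (\<rho> a m))" by (simp add: Mg.subst_lpoly \<rho>_lp)

lemma bnd2_A: "\<exists>N. bnd2 N (\<lambda>p q. \<rho> X (Mg.sn (\<rho> y v) q) p)"
proof -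
  obtain N1 where N1: "bnd N1 (Mg.sn (\<rho> y v))" using lpoly_bnd sn_\<rho>_lp by blast
  show ?thesis
    by (rule bnd2_from[of N1]) (use N1 in \<open>simp_all add: bnd_def \<rho>_0m \<rho>_lp\<close>)
qed

lemma bnd2_B: "\<exists>N. bnd2 N (\<lambda>p q. Mg.sn (\<rho> (br X y p) w) q)"
proof -
  obtain N1 where N1: "bnd N1 (br X y)" using lpoly_bnd br_lp by blast
  show ?thesis
    by (rule bnd2_from'[of N1]) (use N1 in \<open>simp_all add: bnd_def \<rho>_0a Mg.subst_zero sn_\<rho>_lp\<close>)
qed

lemma bnd2_C: "\<exists>N. bnd2 N (\<lambda>n k. Mg.sn (\<rho> Y (\<rho> Z v n)) k)"
proof -
  obtain N1 where N1: "bnd N1 (\<rho> Z v)" using lpoly_bnd \<rho>_lp by blast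
  show ?thesis
    by (rule bnd2_from'[of N1]) (use N1 in \<open>simp_all add: bnd_def \<rho>_0m Mg.subst_zero sn_\<rho>_lp\<close>)
qed

lemma bnd2_Q: "\<exists>N. bnd2 N (\<lambda>n k. \<rho> (br X y n) w k)"
proof -
  obtain N1 where N1: "bnd N1 (br X y)" using lpoly_bnd br_lp by blast
  show ?thesis
    by (rule bnd2_from'[of N1]) (use N1 in \<open>simp_all add: bnd_def \<rho>_0a \<rho>_lp\<close>)
qed

lemma bnd2_D: "\<exists>N. bnd2 N (\<lambda>p q. \<rho> Y (\<rho> Z v p) q)"
proof -
  obtain N1 where N1: "bnd N1 (\<rho> Z v)" using lpoly_bnd \<rho>_lp by blast
  show ?thesis
    by (rule bnd2_from'[of N1]) (use N1 in \<open>simp_all add: bnd_def \<rho>_0m \<rho>_lp\<close>)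
qed

lemma bnd2_D': "\<exists>N. bnd2 N (\<lambda>p q. \<rho> Y (\<rho> Z v q) p)"
proof -
  obtain N1 where N1: "bnd N1 (\<rho> Z v)" using lpoly_bnd \<rho>_lp by blast
  show ?thesis
    by (rule bnd2_from[of N1]) (use N1 in \<open>simp_all add: bnd_def \<rho>_0m \<rho>_lp\<close>)
qed

lemma poly_id1: "pcompose (- [:e:] - [:0, 1:]) ([:0, 1:] + [:c:]) = - [:c + e:] - ([:0,1:] :: complex poly)"
  by (simp add: pcompose_diff pcompose_uminus pcompose_pCons)
lemma poly_id1': "pcompose [:- e, - 1:] [:c, 1:] = [:- c - e, - (1::complex):]"
  by (simp add: pcompose_pCons)
lemma poly_id2: "[:c:] + (- [:c + e:] - [:0, 1:]) = - [:e:] - ([:0,1:] :: complex poly)"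
  by simp

lemma C2:
  assumes u: "u \<in> GR i" and y: "y \<in> GR k"
  shows "\<rho> (\<alpha> (\<beta> u)) (Mg.sn (\<rho> y v) q) p
       = Mg.sn (\<rho> (br (\<beta> u) y p) (\<psi> v)) q + sM (psign i k) (at_sum sM (\<lambda>n k'. Mg.sn (\<rho> (\<beta> y) (\<rho> (\<alpha> u) v n)) k') p q)"
proof -
  let ?X = "\<alpha> (\<beta> u)"
  define Q where "Q n k = \<rho> (br (\<beta> u) y n) (\<psi> v) k" for n k
  define Q2 where "Q2 n k = Mg.sn (\<rho> (\<beta> y) (\<rho> (\<alpha> u) v n)) k" for n k
  obtain NA where NA: "bnd2 NA (\<lambda>p q. \<rho> ?X (Mg.sn (\<rho> y v) q) p)" using bnd2_A by blast
  obtain NB where NB: "bnd2 NB (\<lambda>p q. Mg.sn (Q p) q)" using bnd2_B unfolding Q_def by blast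
  obtain NC where NC: "bnd2 NC Q2" using bnd2_C unfolding Q2_def by blast
  obtain NQ where NQ: "bnd2 NQ Q" using bnd2_Q unfolding Q_def by blast
  obtain ND where ND: "bnd2 ND (\<lambda>p q. \<rho> (\<beta> y) (\<rho> (\<alpha> u) v p) q)" using bnd2_D by blast
  have NC2: "bnd2 (2*NC) (at_sum sM Q2)" by (rule Mg.at_sum_bnd2[OF NC])
  have NQ2: "bnd2 (2*NQ) (at_sum sM Q)" by (rule Mg.at_sum_bnd2[OF NQ])
  have mod: "\<rho> ?X (\<rho> y v q) p = at_sum sM Q p q + sM (psign i k) (\<rho> (\<beta> y) (\<rho> (\<alpha> u) v p) q)" for p q
    using modax[OF u y, of v p q] unfolding Q_def by (simp add: algebra_simps)
  show ?thesis
    unfolding Q_def[symmetric] Q2_def[symmetric]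
  proof (rule Mg.uniq2'[OF NA bnd2_add[OF NB bnd2_map[where f="sM _", OF _ NC2]]])
    show "sM (psign i k) 0 = 0" by simp
    fix c e
    let ?h0 = "- [:c + e:] - [:0,1:] :: complex poly"
    have "Mg.E2 (\<lambda>p q. \<rho> ?X (Mg.sn (\<rho> y v) q) p) c e = Mg.ev (\<rho> ?X (Mg.ev (Mg.sn (\<rho> y v)) [:e:])) [:c:]"
      unfolding Mg.E2_def by (simp add: GS\<rho> sn_\<rho>_lp)
    also have "\<dots> = Mg.ev (\<lambda>n. Mg.ev (\<rho> ?X (\<rho> y v n)) [:c:]) ?h0"
      by (simp add: Mg.OE_subst \<rho>_lp GS\<rho> poly_id1')
    also have "\<dots> = Mg.ev (\<lambda>n. Mg.ev (\<lambda>p. at_sum sM Q p n) [:c:] + sM (psign i k) (\<rho> (\<beta> y) (Mg.ev (\<rho> (\<alpha> u) v) [:c:]) n)) ?h0"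
    proof -
      have "Mg.ev (\<rho> ?X (\<rho> y v n)) [:c:] = Mg.ev (\<lambda>p. at_sum sM Q p n) [:c:] + sM (psign i k) (\<rho> (\<beta> y) (Mg.ev (\<rho> (\<alpha> u) v) [:c:]) n)" for n
      proof -
        have "\<rho> ?X (\<rho> y v n) = (\<lambda>p. at_sum sM Q p n + sM (psign i k) (\<rho> (\<beta> y) (\<rho> (\<alpha> u) v p) n))"
          by (simp add: fun_eq_iff mod)
        moreover have l1: "lpoly (\<lambda>p. at_sum sM Q p n)" by (rule bnd2_lp1[OF NQ2])
        moreover have l2: "lpoly (\<lambda>p. \<rho> (\<beta> y) (\<rho> (\<alpha> u) v p) n)" by (rule bnd2_lp1[OF ND])
        moreover have l3: "lpoly (\<lambda>p. sM (psign i k) (\<rho> (\<beta> y) (\<rho> (\<alpha> u) v p) n))"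
          by (rule lpoly_map[where f="sM (psign i k)", OF _ l2]) simp
        ultimately show ?thesis
          by (simp add: Mg.OE_add[OF l1 l3] Mg.OE_scale[OF l2] LIN\<rho>[OF \<rho>_lp])
      qed
      then show ?thesis by simp
    qed
    also have "\<dots> = Mg.ev (\<lambda>n. Mg.ev (\<lambda>p. at_sum sM Q p n) [:c:]) ?h0 + sM (psign i k) (Mg.ev (\<rho> (\<beta> y) (Mg.ev (\<rho> (\<alpha> u) v) [:c:])) ?h0)"
      by (simp add: Mg.OE_add Mg.OE_scale Mg.E2_lp[OF NQ2] \<rho>_lp lpoly_map)
    also have "Mg.ev (\<lambda>n. Mg.ev (\<lambda>p. at_sum sM Q p n) [:c:]) ?h0 = Mg.ev (\<lambda>n. Mg.ev (Q n) (- [:e:] - [:0,1:])) [:c:]"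
    proof -
      have NQ': "\<And>i j. NQ < i \<or> NQ < j \<Longrightarrow> Q i j = 0" using NQ unfolding bnd2_def by blast
      have hp: "[:c:] + ?h0 = - [:e:] - [:0,1:]" by simp
      show ?thesis
        apply (subst Mg.AT[where N=NQ and Q=Q])
         apply (erule NQ')
        by (simp only: hp)
    qed
    also have "\<dots> = Mg.E2 (\<lambda>p q. Mg.sn (Q p) q) c e"
    proof -
      have lQ: "lpoly (Q n)" for n by (simp add: Q_def[abs_def] \<rho>_lp)
      show ?thesis unfolding Mg.E2_def by (simp add: Mg.Ev2_swap[OF NB] Mg.OE_subst[OF lQ])
    qed
    also have "Mg.ev (\<rho> (\<beta> y) (Mg.ev (\<rho> (\<alpha> u) v) [:c:])) ?h0 = Mg.E2 (at_sum sM Q2) c e"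
    proof -
      have NC': "\<And>i j. NC < i \<or> NC < j \<Longrightarrow> Q2 i j = 0" using NC unfolding bnd2_def by blast
      show ?thesis unfolding Mg.E2_def
        apply (subst Mg.AT[where N=NC and Q=Q2])
         apply (erule NC')
        using Q2_def[abs_def] by (simp add: GS\<rho> \<rho>_lp Mg.OE_subst)
    qed
    finally show "Mg.E2 (\<lambda>p q. \<rho> ?X (Mg.sn (\<rho> y v) q) p) c e = Mg.E2 (\<lambda>p q. Mg.sn (Q p) q + sM (psign i k) (at_sum sM Q2 p q)) c e"
      by (simp add: Mg.E2_add[OF NB bnd2_map[where f="sM _", OF _ NC2]] Mg.E2_scale[OF NC2])
  qed
qed

end

lemma bnd2_swap: "bnd2 N F \<Longrightarrow> bnd2 N (\<lambda>p q. F q p)"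
  unfolding bnd2_def by blast

context setting begin

lemma bnd2_C': "\<exists>N. bnd2 N (\<lambda>n k. Mg.sn (\<rho> Y (Mg.sn (\<rho> Z v) n)) k)"
proof -
  obtain N1 where N1: "bnd N1 (Mg.sn (\<rho> Z v))" using lpoly_bnd sn_\<rho>_lp by blast
  show ?thesis
    by (rule bnd2_from'[of N1]) (use N1 in \<open>simp_all add: bnd_def \<rho>_0m Mg.subst_zero sn_\<rho>_lp\<close>)
qed

lemma poly_id3: "pcompose [:a, - 1:] [:b, 1:] = [:a - b, - (1::complex):]"
  by (simp add: pcompose_pCons)
lemma poly_id4: "pcompose [:- c, - 1:] [:- c - e:] = [:e::complex:]"
  by (simp add: pcompose_pCons)

lemma C1:
  assumes x: "x \<in> GR j" and y: "y \<in> GR k"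
  shows "Mg.sn (\<rho> (br (\<beta> x) y q) (\<psi> w)) p
       = \<rho> (\<alpha> (\<beta> x)) (Mg.sn (\<rho> y w) p) q - sM (psign j k) (at_sum sM (\<lambda>n k'. Mg.sn (\<rho> (\<beta> y) (Mg.sn (\<rho> (\<alpha> x) w) n)) k') p q)"
proof -
  let ?X = "\<alpha> (\<beta> x)"
  define Q where "Q n k = \<rho> (br (\<beta> x) y n) (\<psi> w) k" for n k
  define Q3 where "Q3 n k = Mg.sn (\<rho> (\<beta> y) (Mg.sn (\<rho> (\<alpha> x) w) n)) k" for n k
  have Qe: "Q n = \<rho> (br (\<beta> x) y n) (\<psi> w)" for n by (simp add: Q_def[abs_def])
  have Q3e: "Q3 n = Mg.sn (\<rho> (\<beta> y) (Mg.sn (\<rho> (\<alpha> x) w) n))" for n by (simp add: Q3_def[abs_def])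
  obtain NF where NF0: "bnd2 NF (\<lambda>p q. Mg.sn (Q p) q)" using bnd2_B unfolding Q_def by blast
  have NF: "bnd2 NF (\<lambda>p q. Mg.sn (Q q) p)" using bnd2_swap[OF NF0] .
  obtain NG where NG0: "bnd2 NG (\<lambda>p q. \<rho> ?X (Mg.sn (\<rho> y w) q) p)" using bnd2_A by blast
  have NG: "bnd2 NG (\<lambda>p q. \<rho> ?X (Mg.sn (\<rho> y w) p) q)" using bnd2_swap[OF NG0] .
  obtain N3 where N3: "bnd2 N3 Q3" using bnd2_C' unfolding Q3_def by blast
  have N32: "bnd2 (2*N3) (at_sum sM Q3)" by (rule Mg.at_sum_bnd2[OF N3])
  obtain NQ where NQ: "bnd2 NQ Q" using bnd2_Q unfolding Q_def by blast
  have NQ2: "bnd2 (2*NQ) (at_sum sM Q)" by (rule Mg.at_sum_bnd2[OF NQ])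
  obtain ND where ND: "bnd2 ND (\<lambda>p q. \<rho> (\<beta> y) (\<rho> (\<alpha> x) w p) q)" using bnd2_D by blast
  obtain ND' where ND': "bnd2 ND' (\<lambda>p q. \<rho> ?X (\<rho> y w q) p)" using bnd2_D' by blast
  have NQ': "\<And>i j. NQ < i \<or> NQ < j \<Longrightarrow> Q i j = 0" using NQ unfolding bnd2_def by blast
  have N3': "\<And>i j. N3 < i \<or> N3 < j \<Longrightarrow> Q3 i j = 0" using N3 unfolding bnd2_def by blast
  have mod: "at_sum sM Q p q = \<rho> ?X (\<rho> y w q) p - sM (psign j k) (\<rho> (\<beta> y) (\<rho> (\<alpha> x) w p) q)" for p q
    using modax[OF x y, of w p q] unfolding Q_def by simp
  show ?thesis
    unfolding Q_def[symmetric] Q3_def[symmetric]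
  proof (rule Mg.uniq2'[OF NF bnd2_diff[OF NG bnd2_map[where f="sM _", OF _ N32]]])
    show "sM (psign j k) 0 = 0" by simp
    fix c e
    let ?h1 = "[:- c - e, - 1:] :: complex poly"
    have T: "Mg.ev (\<lambda>p'. at_sum sM Q p' q') [:e:] = Mg.ev (\<rho> ?X (\<rho> y w q')) [:e:] - sM (psign j k) (\<rho> (\<beta> y) (Mg.ev (\<rho> (\<alpha> x) w) [:e:]) q')" for q'
    proof -
      have l2: "lpoly (\<lambda>p. \<rho> (\<beta> y) (\<rho> (\<alpha> x) w p) q')" by (rule bnd2_lp1[OF ND])
      have l3: "lpoly (\<lambda>p. sM (psign j k) (\<rho> (\<beta> y) (\<rho> (\<alpha> x) w p) q'))"
        by (rule lpoly_map[where f="sM (psign j k)", OF _ l2]) simp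
      have l1: "lpoly (\<lambda>p. \<rho> ?X (\<rho> y w q') p)" by (rule \<rho>_lp)
      show ?thesis unfolding mod
        by (simp add: Mg.OE_diff[OF l1 l3] Mg.OE_scale[OF l2] LIN\<rho>[OF \<rho>_lp])
    qed
    have lT1: "lpoly (\<lambda>q'. Mg.ev (\<rho> ?X (\<rho> y w q')) [:e:])" by (rule Mg.E2_lp[OF ND'])
    have lT2: "lpoly (\<lambda>q'. sM (psign j k) (\<rho> (\<beta> y) (Mg.ev (\<rho> (\<alpha> x) w) [:e:]) q'))"
      by (rule lpoly_map[where f="sM (psign j k)", OF _ \<rho>_lp]) simp
    have "Mg.E2 (\<lambda>p q. Mg.sn (Q q) p) c e = Mg.ev (\<lambda>q. Mg.ev (Q q) [:- c, - 1:]) [:e:]"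
      unfolding Mg.E2_def by (simp add: Mg.OE_subst Qe \<rho>_lp)
    also have "\<dots> = Mg.ev (\<lambda>q'. Mg.ev (\<lambda>p'. at_sum sM Q p' q') [:e:]) ?h1"
      apply (subst Mg.AT[where N=NQ and Q=Q])
       apply (erule NQ')
      by simp
    also have "\<dots> = Mg.ev (\<lambda>q'. Mg.ev (\<rho> ?X (\<rho> y w q')) [:e:]) ?h1 - sM (psign j k) (Mg.ev (\<rho> (\<beta> y) (Mg.ev (\<rho> (\<alpha> x) w) [:e:])) ?h1)"
      unfolding T by (simp add: Mg.OE_diff[OF lT1 lT2] Mg.OE_scale[OF \<rho>_lp])
    also have "Mg.ev (\<lambda>q'. Mg.ev (\<rho> ?X (\<rho> y w q')) [:e:]) ?h1 = Mg.E2 (\<lambda>p q. \<rho> ?X (Mg.sn (\<rho> y w) p) q) c e"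
    proof -
      have "Mg.E2 (\<lambda>p q. \<rho> ?X (Mg.sn (\<rho> y w) p) q) c e = Mg.ev (\<lambda>p. Mg.ev (\<rho> ?X (Mg.sn (\<rho> y w) p)) [:e:]) [:c:]"
        unfolding Mg.E2_def by (simp add: Mg.Ev2_swap[OF NG])
      also have "\<dots> = Mg.ev (\<rho> ?X (Mg.ev (Mg.sn (\<rho> y w)) [:c:])) [:e:]"
        using GS\<rho>[where P="Mg.sn (\<rho> y w)" and z="\<alpha> (\<beta> x)" and g="[:c:]" and h="[:e:]", OF sn_\<rho>_lp] by simp
      also have "\<dots> = Mg.ev (\<lambda>q'. Mg.ev (\<rho> ?X (\<rho> y w q')) [:e:]) ?h1"
        by (simp add: Mg.OE_subst \<rho>_lp GS\<rho> poly_id3)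
      finally show ?thesis by simp
    qed
    also have "Mg.ev (\<rho> (\<beta> y) (Mg.ev (\<rho> (\<alpha> x) w) [:e:])) ?h1 = Mg.E2 (at_sum sM Q3) c e"
      unfolding Mg.E2_def
      apply (subst Mg.AT[where N=N3 and Q=Q3])
       apply (erule N3')
    proof -
      have "Mg.ev (\<lambda>n. Mg.ev (Q3 n) ([:c:] + [:e:])) [:c:] = Mg.ev (\<lambda>n. Mg.ev (\<rho> (\<beta> y) (Mg.sn (\<rho> (\<alpha> x) w) n)) ?h1) [:c:]"
        by (simp add: Q3e Mg.OE_subst \<rho>_lp)
      also have "\<dots> = Mg.ev (\<rho> (\<beta> y) (Mg.ev (Mg.sn (\<rho> (\<alpha> x) w)) [:c:])) ?h1"
        using GS\<rho>[where P="Mg.sn (\<rho> (\<alpha> x) w)" and z="\<beta> y" and g="[:c:]" and h="?h1", OF sn_\<rho>_lp] by simp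
      also have "\<dots> = Mg.ev (\<lambda>n. Mg.ev (\<rho> (\<beta> y) (\<rho> (\<alpha> x) w n)) ?h1) [:e:]"
        by (simp add: Mg.OE_subst \<rho>_lp GS\<rho> poly_id4)
      also have "\<dots> = Mg.ev (\<rho> (\<beta> y) (Mg.ev (\<rho> (\<alpha> x) w) [:e:])) ?h1"
        using GS\<rho>[where P="\<rho> (\<alpha> x) w" and z="\<beta> y" and g="[:e:]" and h="?h1", OF \<rho>_lp] by simp
      finally show "Mg.ev (\<rho> (\<beta> y) (Mg.ev (\<rho> (\<alpha> x) w) [:e:])) ?h1 = Mg.ev (\<lambda>n. Mg.ev (Q3 n) ([:c:] + [:e:])) [:c:]"
        by simp
    qed
    finally show "Mg.E2 (\<lambda>p q. Mg.sn (Q q) p) c e = Mg.E2 (\<lambda>p q. \<rho> ?X (Mg.sn (\<rho> y w) p) q - sM (psign j k) (at_sum sM Q3 p q)) c e"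
      by (simp add: Mg.E2_diff[OF NG bnd2_map[where f="sM _", OF _ N32]] Mg.E2_scale[OF N32])
  qed
qed

end

context dmod begin
lemma at_sum_add: "at_sum s (\<lambda>n k. A n k + B n k) p q = at_sum s A p q + at_sum s B p q"
  by (simp add: at_sum_def sum.distrib V.scale_right_distrib)
lemma at_sum_diff: "at_sum s (\<lambda>n k. A n k - B n k) p q = at_sum s A p q - at_sum s B p q"
  by (simp add: at_sum_def sum_subtractf V.scale_right_diff_distrib)
lemma at_sum_scale: "at_sum s (\<lambda>n k. s c (A n k)) p q = s c (at_sum s A p q)"
  by (simp add: at_sum_def V.scale_sum_right mult.commute)
end

context setting begin

lemma at_sum_fst: "fst (at_sum PS Q p q) = at_sum sR (\<lambda>n k. fst (Q n k)) p q"
  by (simp add: at_sum_def fst_sum)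
lemma at_sum_snd: "snd (at_sum PS Q p q) = at_sum sM (\<lambda>n k. snd (Q n k)) p q"
  by (simp add: at_sum_def snd_sum)

lemma \<rho>_diff_fun: "\<rho> a (x - y) = (\<lambda>n. \<rho> a x n - \<rho> a y n)" by (simp add: fun_eq_iff \<rho>L2)
lemma \<rho>_scale_fun: "\<rho> a (sM c x) = (\<lambda>n. sM c (\<rho> a x n))" by (simp add: fun_eq_iff \<rho>L2)

lemma sign_combo:
  fixes A B C D E F :: 'm
  shows "A - sM (psign k j) (C + sM (psign i k) D) - sM (psign (j \<noteq> k) i) (E - sM (psign j k) F)
   = (A - sM (psign i j) B) - sM (psign k (i \<noteq> j)) D + sM (psign k (i \<noteq> j)) (sM (psign j i) F)
     + sM (psign i j) (B - sM (psign k i) E - sM (psign (i \<noteq> k) j) C)"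
  by (cases i; cases j; cases k) (simp_all add: psign_def Mg.V.scale_right_diff_distrib Mg.V.scale_right_distrib algebra_simps)

lemma G17:
  assumes a: "a \<in> PG i" and b: "b \<in> PG j" and c: "c \<in> PG k"
  shows "PB (P\<alpha> (P\<beta> a)) (PB b c q) p = at_sum PS (\<lambda>n. PB (PB (P\<beta> a) b n) (P\<beta> c)) p q + PS (psign i j) (PB (P\<beta> b) (PB (P\<alpha> a) c p) q)"
proof -
  obtain u m1 where aa: "a = (u, m1)" by (cases a)
  obtain v m2 where bb: "b = (v, m2)" by (cases b)
  obtain w m3 where cc: "c = (w, m3)" by (cases c)
  have u: "u \<in> GR i" and v: "v \<in> GR j" and w: "w \<in> GR k" using a b c aa bb cc by (simp_all add: memPG)
  have h1: "P\<alpha> (P\<beta> a) \<in> PG i" using G5 a by blast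
  have h2: "PB b c q \<in> PG (j \<noteq> k)" by (rule G9[OF b c])
  have h3: "P\<beta> a \<in> PG i" using G5 a by blast
  have h4: "PB (P\<beta> a) b n \<in> PG (i \<noteq> j)" for n by (rule G9[OF h3 b])
  have h5: "P\<beta> c \<in> PG k" using G5 c by blast
  have h6: "P\<alpha> a \<in> PG i" using G5 a by blast
  have h7: "PB (P\<alpha> a) c p \<in> PG (i \<noteq> k)" by (rule G9[OF h6 c])
  have h8: "P\<beta> b \<in> PG j" using G5 b by blast
  define x0 where "x0 = \<alpha>i v"
  define y0 where "y0 = \<alpha>i (\<beta> w)"
  define v2 where "v2 = \<phi> (\<psi>i m2)"
  define w1 where "w1 = \<phi> (\<psi>i (\<phi> m1))"
  have x0: "x0 \<in> GR j" unfolding x0_def by (rule \<alpha>i_gr[OF v])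
  have y0: "y0 \<in> GR k" unfolding y0_def by (rule \<alpha>i_gr[OF \<beta>_gr[OF w]])
  have ax0: "\<alpha> x0 = v" unfolding x0_def by (rule \<alpha>_\<alpha>i)
  have abx0: "\<alpha> (\<beta> x0) = \<beta> v" unfolding x0_def by (simp add: \<alpha>\<beta> \<alpha>_\<alpha>i)
  have T1: "tm w m2 = \<rho> y0 v2" by (simp add: tm_def y0_def v2_def)
  have T2: "tm (br v w q) (\<phi> (\<psi> m1)) = \<rho> (br (\<beta> x0) y0 q) (\<psi> w1)"
    by (simp add: tm_def x0_def y0_def w1_def \<alpha>i_br \<alpha>i_\<beta> \<psi>i_\<phi> \<psi>i_\<psi> \<phi>\<psi>[symmetric] \<psi>_\<psi>i \<beta>_br)
  have T3: "tm v (\<psi> m1) = \<rho> (\<beta> x0) (\<phi> m1)"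
    by (simp add: tm_def x0_def \<alpha>i_\<beta> \<psi>i_\<psi>)
  have T5: "tm w (\<phi> m1) = \<rho> y0 w1" by (simp add: tm_def y0_def w1_def)
  have T6: "tm (br (\<alpha> u) w p) (\<psi> m2) = \<rho> (br (\<beta> u) y0 p) (\<psi> v2)"
    by (simp add: tm_def y0_def v2_def \<alpha>i_br \<alpha>i_\<beta> \<alpha>i_\<alpha> \<psi>i_\<psi> \<phi>\<psi>[symmetric] \<psi>_\<psi>i \<beta>_br)
  have W1: "\<phi> (\<psi>i (\<rho> (\<beta> u) m2 n)) = \<rho> (\<alpha> u) v2 n" for n
    by (simp add: v2_def \<psi>i_\<rho> \<phi>_\<rho>)
  have W2: "\<phi> (\<psi>i (Mg.sn (\<rho> (\<beta> x0) (\<phi> m1)) n)) = Mg.sn (\<rho> v w1) n" for n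
  proof -
    have lin: "Vector_Spaces.linear sM sM (\<lambda>z. \<phi> (\<psi>i z))"
      using Vector_Spaces.linear_compose[OF \<psi>i_lin \<phi>_lin] by (simp add: o_def)
    have "\<phi> (\<psi>i (Mg.sn (\<rho> (\<beta> x0) (\<phi> m1)) n)) = Mg.sn (\<lambda>k. \<phi> (\<psi>i (\<rho> (\<beta> x0) (\<phi> m1) k))) n"
      by (rule Mg.subst_comm[OF lin _ \<rho>_lp]) (simp add: \<psi>i_d \<phi>_d)
    also have "(\<lambda>k. \<phi> (\<psi>i (\<rho> (\<beta> x0) (\<phi> m1) k))) = \<rho> v w1"
      by (simp add: fun_eq_iff \<psi>i_\<rho> \<phi>_\<rho> ax0 w1_def)
    finally show ?thesis .
  qed
  have T4: "tm (\<beta> w) Z = \<rho> (\<beta> y0) (\<phi> (\<psi>i Z))" for Z by (simp add: tm_def y0_def \<alpha>i_\<beta>)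
  let ?A = "\<rho> (\<alpha> (\<beta> u)) (\<rho> v m3 q) p"
  let ?B = "\<rho> (\<beta> v) (\<rho> (\<alpha> u) m3 p) q"
  let ?C = "Mg.sn (\<rho> (br (\<beta> u) y0 p) (\<psi> v2)) q"
  let ?D = "at_sum sM (\<lambda>n k'. Mg.sn (\<rho> (\<beta> y0) (\<rho> (\<alpha> u) v2 n)) k') p q"
  let ?E = "\<rho> (\<beta> v) (Mg.sn (\<rho> y0 w1) p) q"
  let ?F = "at_sum sM (\<lambda>n k'. Mg.sn (\<rho> (\<beta> y0) (Mg.sn (\<rho> v w1) n)) k') p q"
  have mod3: "at_sum sM (\<lambda>n. \<rho> (br (\<beta> u) v n) (\<psi> m3)) p q = ?A - sM (psign i j) ?B"
    by (rule modax[OF u v])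
  have c2: "\<rho> (\<alpha> (\<beta> u)) (Mg.sn (\<rho> y0 v2) q) p = ?C + sM (psign i k) ?D"
    by (rule C2[OF u y0])
  have c1: "Mg.sn (\<rho> (br (\<beta> x0) y0 q) (\<psi> w1)) p = ?E - sM (psign j k) ?F"
    using C1[OF x0 y0, of q w1 p] by (simp add: abx0 ax0)
  have L: "snd (PB (P\<alpha> (P\<beta> a)) (PB b c q) p) = ?A - sM (psign k j) (\<rho> (\<alpha> (\<beta> u)) (Mg.sn (\<rho> y0 v2) q) p)
            - sM (psign (j \<noteq> k) i) (Mg.sn (\<rho> (br (\<beta> x0) y0 q) (\<psi> w1)) p)"
    using PB_hom[OF h1 h2, of p] PB_hom[OF b c, of q] aa bb cc
    by (simp add: T1 T2 \<rho>L2)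
  have R1: "snd (at_sum PS (\<lambda>n. PB (PB (P\<beta> a) b n) (P\<beta> c)) p q)
     = at_sum sM (\<lambda>n. \<rho> (br (\<beta> u) v n) (\<psi> m3)) p q - sM (psign k (i \<noteq> j)) ?D + sM (psign k (i \<noteq> j)) (sM (psign j i) ?F)"
  proof -
    have e: "snd (PB (PB (P\<beta> a) b n) (P\<beta> c) k') =
       \<rho> (br (\<beta> u) v n) (\<psi> m3) k' - sM (psign k (i \<noteq> j)) (Mg.sn (\<rho> (\<beta> y0) (\<rho> (\<alpha> u) v2 n)) k')
       + sM (psign k (i \<noteq> j)) (sM (psign j i) (Mg.sn (\<rho> (\<beta> y0) (Mg.sn (\<rho> v w1) n)) k'))" for n k'
    proof -
      have "snd (PB (PB (P\<beta> a) b n) (P\<beta> c) k') = \<rho> (br (\<beta> u) v n) (\<psi> m3) k'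
          - sM (psign k (i \<noteq> j)) (Mg.sn (tm (\<beta> w) (\<rho> (\<beta> u) m2 n - sM (psign j i) (Mg.sn (tm v (\<psi> m1)) n))) k')"
        using PB_hom[OF h4[of n] h5, of k'] PB_hom[OF h3 b, of n] aa bb cc by simp
      also have "tm (\<beta> w) (\<rho> (\<beta> u) m2 n - sM (psign j i) (Mg.sn (tm v (\<psi> m1)) n))
          = (\<lambda>k'. \<rho> (\<beta> y0) (\<rho> (\<alpha> u) v2 n) k' - sM (psign j i) (\<rho> (\<beta> y0) (Mg.sn (\<rho> v w1) n) k'))"
        by (simp add: T4 T3 \<psi>iL \<phi>L W1 W2 \<rho>_diff_fun \<rho>_scale_fun)
      finally show ?thesis
        by (simp add: Mg.subst_diff Mg.subst_scale \<rho>_lp lpoly_map Mg.V.scale_right_diff_distrib)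
    qed
    show ?thesis
      by (simp add: at_sum_snd e Mg.at_sum_add Mg.at_sum_diff Mg.at_sum_scale)
  qed
  have R2: "snd (PS (psign i j) (PB (P\<beta> b) (PB (P\<alpha> a) c p) q))
     = sM (psign i j) (?B - sM (psign k i) ?E - sM (psign (i \<noteq> k) j) ?C)"
    using PB_hom[OF h8 h7, of q] PB_hom[OF h6 c, of p] aa bb cc
    by (simp add: T5 T6 \<rho>L2)
  have fstEq: "fst (PB (P\<alpha> (P\<beta> a)) (PB b c q) p) = fst (at_sum PS (\<lambda>n. PB (PB (P\<beta> a) b n) (P\<beta> c)) p q + PS (psign i j) (PB (P\<beta> b) (PB (P\<alpha> a) c p) q))"
    using jacR[OF u v w, of q p] aa bb cc by (simp add: PB_eq at_sum_fst)
  have sndEq: "snd (PB (P\<alpha> (P\<beta> a)) (PB b c q) p) = snd (at_sum PS (\<lambda>n. PB (PB (P\<beta> a) b n) (P\<beta> c)) p q + PS (psign i j) (PB (P\<beta> b) (PB (P\<alpha> a) c p) q))"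
    unfolding snd_add L R1 R2 c1 c2 mod3 by (rule sign_combo)
  show ?thesis using fstEq sndEq by (simp add: prod_eq_iff)
qed

end

context setting begin

lemma final: "bihom_lcsa PS PG PD PB P\<alpha> P\<beta>"
  unfolding bihom_lcsa_def
  by (intro conjI allI impI)
     (assumption | rule G1 G2 G3 G4 G5[THEN conjunct1] G5[THEN conjunct2] G6 G7 G8 G9 G10 G11 G12 G13 G14 G15 G16 G17)+

end

theorem mainTheorem6:
  fixes sR :: "complex \<Rightarrow> 'r::ab_group_add \<Rightarrow> 'r" and GR :: "bool \<Rightarrow> 'r set"
    and dR :: "'r \<Rightarrow> 'r" and br :: "'r \<Rightarrow> 'r \<Rightarrow> nat \<Rightarrow> 'r"
    and \<alpha> \<beta> :: "'r \<Rightarrow> 'r"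
    and sM :: "complex \<Rightarrow> 'm::ab_group_add \<Rightarrow> 'm" and GM :: "bool \<Rightarrow> 'm set"
    and dM :: "'m \<Rightarrow> 'm" and \<rho> :: "'r \<Rightarrow> 'm \<Rightarrow> nat \<Rightarrow> 'm"
    and \<phi> \<psi> :: "'m \<Rightarrow> 'm"
  assumes R: "bihom_lcsa sR GR dR br \<alpha> \<beta>"
    and regular: "bij \<alpha>" "bij \<beta>"
    and M: "bihom_conf_module sR GR dR br \<alpha> \<beta> sM GM dM \<rho> \<phi> \<psi>"
    and psi_inv: "bij \<psi>"
  shows "bihom_lcsa (prod_scale sR sM) (prod_grading GR GM) (map_prod dR dM)
           (sd_bracket GR br \<alpha> \<beta> sM GM dM \<rho> \<phi> \<psi>) (map_prod \<alpha> \<phi>) (map_prod \<beta> \<psi>)"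
proof -
  interpret setting sR GR dR br \<alpha> \<beta> sM GM dM \<rho> \<phi> \<psi>
    by (rule setting.intro[OF R regular M psi_inv])
  show ?thesis by (rule final)
qed


end
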